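(* (i) For every $L>0$, the map $\Delta\mapsto\mathrm P_\Delta(|\hat\tau_{\rm ST}-\tau|\le L(1+\gamma)^{-1/2}\sigma_0)$ is symmetric about $\Delta=0$ and monotonically decreasing in $|\Delta|$. (ii) For every $t\in\mathbb R$ and $L\ge0$, with $c=c_{\alpha/2}$, \begin{align*} G_{\rm ST}(t,L):={}&\mathrm P_{\Delta/\sigma_0=t}\big(|\hat\tau_{\rm ST}-\tau|\le L(1+\gamma)^{-1/2}\sigma_0\big)\\ ={}&\Big[\Phi\big(c-\sqrt{\tfrac{\gamma}{1+\gamma}}t\big)-\Phi\big(-c-\sqrt{\tfrac{\gamma}{1+\gamma}}t\big)\Big]\Big[\Phi\big(L-\tfrac{\gamma}{\sqrt{1+\gamma}}t\big)-\Phi\big(-L-\tfrac{\gamma}{\sqrt{1+\gamma}}t\big)\Big]\\ &+\int_{-\infty}^{-c-\sqrt{\frac{\gamma}{1+\gamma}}t}\big[\Phi(L+\sqrt\gamma(u+c))-\Phi(-L+\sqrt\gamma(u+c))\big]\phi(u)\,du\\ &+\int_{c-\sqrt{\frac{\gamma}{1+\gamma}}t}^{\infty}\big[\Phi(L+\sqrt\gamma(u-c))-\Phi(-L+\sqrt\gamma(u-c))\big]\phi(u)\,du. \end{align*} (iii) Fix $b\ge0$ and $\zeta\in(0,1)$, and let \[ \hat L_{\rm ST}=\inf\Big\{L\ge0:\inf_{\Delta:|\Delta/\sigma_0|\le b}\mathrm P_\Delta\big(|\hat\tau_{\rm ST}-\tau|\le L(1+\gamma)^{-1/2}\sigma_0\big)\ge1-\zeta\Big\}.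 \] Then $\hat L_{\rm ST}$ is the solution in $L$ of $G_{\rm ST}(b,L)=1-\zeta$. Hence $[\hat\tau_{\rm ST}\pm\hat L_{\rm ST}(1+\gamma)^{-1/2}\sigma_0]$ is the shortest symmetric interval centered at $\hat\tau_{\rm ST}$, with data-independent half-length, having coverage at least $1-\zeta$ uniformly over $|\Delta/\sigma_0|\le b$.
   Context: Let $\tau\in\mathbb R$ be an unknown parameter and $\Delta\in\mathbb R$ an unknown bias. Let $\sigma_0,\sigma_1>0$ be known. We observe independent random variables $\hat\tau_0\sim N(\tau,\sigma_0^2)$ and $\hat\tau_1\sim N(\tau+\Delta,\sigma_1^2)$. Define $\gamma=\sigma_0^2/\sigma_1^2$ and $\sigma=\sqrt{\sigma_0^2+\sigma_1^2}$. Write $\Phi$ and $\phi$ for the standard normal CDF and density. For $a\in(0,1)$, let $c_a=\Phi^{-1}(1-a)$. Fix a tuning level $\alpha\in(0,1)$. Let $\mathcal A=\{|\hat\tau_1-\hat\tau_0|\le\sigma c_{\alpha/2}\}$. The soft-thresholding estimator is \[ \hat\tau_{\rm ST}=\hat\tau_0+\frac{\gamma}{1+\gamma}(\hat\tau_1-\hat\tau_0)\mathbf 1(\mathcal A)+\frac{\gamma}{1+\gamma}\sigma c_{\alpha/2}\,\mathrm{sign}(\hat\tau_1-\hat\tau_0)\mathbf 1(\mathcal A^c). \] $\mathrm P_\Delta$ denotes probability under bias $\Delta$, and $\mathrm P_{\Delta/\sigma_0=t}$ means probability under $\Delta=t\sigma_0$. These probabilities do not depend on $\tau$. *)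

theory Defs
  imports "HOL-Probability.Probability"
begin

definition Phi_std :: "real \<Rightarrow> real" where
  "Phi_std x = measure (density lborel std_normal_density) {..x}"

definition phi_std :: "real \<Rightarrow> real" where
  "phi_std x = std_normal_density x"

definition crit :: "real \<Rightarrow> real" where
  "crit a = (THE x. Phi_std x = 1 - a)"

definition gam :: "real \<Rightarrow> real \<Rightarrow> real" where
  "gam s0 s1 = s0^2 / s1^2"

definition sig :: "real \<Rightarrow> real \<Rightarrow> real" where
  "sig s0 s1 = sqrt (s0^2 + s1^2)"

text \<open>Soft-thresholding estimator as a function of the observations (x0,x1) = (tau0hat, tau1hat).\<close>
definition tau_ST :: "real \<Rightarrow> real \<Rightarrow> real \<Rightarrow> real \<Rightarrow> real \<Rightarrow> real" where
  "tau_ST s0 s1 \<alpha> x0 x1 =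
     (let g = gam s0 s1; c = crit (\<alpha>/2); s = sig s0 s1; d = x1 - x0 in
      x0 + g/(1+g) * d * (if \<bar>d\<bar> \<le> s * c then 1 else 0)
         + g/(1+g) * s * c * sgn d * (if \<bar>d\<bar> \<le> s * c then 0 else 1))"

definition obs_law :: "real \<Rightarrow> real \<Rightarrow> real \<Rightarrow> real \<Rightarrow> (real \<times> real) measure" where
  "obs_law s0 s1 \<tau> \<Delta> =
     density (lborel \<Otimes>\<^sub>M lborel)
       (\<lambda>(x0, x1). ennreal (normal_density \<tau> s0 x0 * normal_density (\<tau> + \<Delta>) s1 x1))"

definition cov_ST :: "real \<Rightarrow> real \<Rightarrow> real \<Rightarrow> real \<Rightarrow> real \<Rightarrow> real \<Rightarrow> real" where
  "cov_ST s0 s1 \<alpha> \<tau> \<Delta> L =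
     measure (obs_law s0 s1 \<tau> \<Delta>)
       {(x0, x1). \<bar>tau_ST s0 s1 \<alpha> x0 x1 - \<tau>\<bar> \<le> L * (1 + gam s0 s1) powr (-1/2) * s0}"

end

theory Submission
  imports Defs "HOL-Real_Asymp.Real_Asymp"
begin

abbreviation PSM :: "real measure" where "PSM \<equiv> density lborel std_normal_density"

lemma PSM_real_distribution: "real_distribution PSM"
  unfolding real_distribution_def real_distribution_axioms_def
  using prob_space_normal_density by auto

interpretation PS: real_distribution PSM by (rule PSM_real_distribution)

lemma Phi_cdf: "Phi_std = cdf PSM"
  by (auto simp: Phi_std_def cdf_def2 fun_eq_iff)

lemma emeasure_PSM: "A \<in> sets borel \<Longrightarrow> emeasure PSM A = (\<integral>\<^sup>+x. ennreal (std_normal_density x) * indicator A x \<partial>lborel)"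
  by (simp add: emeasure_density)

lemma PSM_singleton: "measure PSM {x} = 0"
proof -
  have "emeasure PSM {x} = (\<integral>\<^sup>+y. ennreal (std_normal_density y) * indicator {x} y \<partial>lborel)"
    by (simp add: emeasure_PSM)
  also have "(\<lambda>y. ennreal (std_normal_density y) * indicator {x} y) = (\<lambda>y. ennreal (std_normal_density x) * indicator {x} y)"
    by (auto split: split_indicator)
  also have "(\<integral>\<^sup>+y. ennreal (std_normal_density x) * indicator {x} y \<partial>lborel) = 0"
    by (subst nn_integral_cmult_indicator) auto
  finally show ?thesis by (simp add: measure_def)
qed

lemma Phi_mono: "x \<le> y \<Longrightarrow> Phi_std x \<le> Phi_std y"
  by (simp add: Phi_cdf PS.cdf_nondecreasing)

lemma Phi_isCont: "isCont Phi_std x"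
  by (simp add: Phi_cdf PS.isCont_cdf PSM_singleton)

lemma Phi_cont: "continuous_on A Phi_std"
  by (simp add: Phi_isCont continuous_at_imp_continuous_on)

lemma Phi_nonneg: "0 \<le> Phi_std x" by (simp add: Phi_std_def)
lemma Phi_le1: "Phi_std x \<le> 1" by (simp add: Phi_cdf PS.cdf_bounded_prob)

lemma Phi_diff_emeasure:
  assumes "x \<le> y"
  shows "ennreal (Phi_std y - Phi_std x) = (\<integral>\<^sup>+t. ennreal (std_normal_density t) * indicator {x<..y} t \<partial>lborel)"
proof -
  have "Phi_std y - Phi_std x = measure PSM {x<..y}"
    using PS.cdf_diff_eq[of x y] assms Phi_cdf by (cases "x = y") auto
  then show ?thesis
    by (simp add: PS.emeasure_eq_measure[symmetric] emeasure_PSM)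
qed

lemma Phi_diff_emeasure_cc:
  assumes "x \<le> y"
  shows "ennreal (Phi_std y - Phi_std x) = (\<integral>\<^sup>+t. ennreal (std_normal_density t) * indicator {x..y} t \<partial>lborel)"
  unfolding Phi_diff_emeasure[OF assms]
  by (rule nn_integral_cong_AE) (use AE_lborel_singleton[of x] in \<open>auto split: split_indicator\<close>)

lemma Phi_at_top: "(Phi_std \<longlongrightarrow> 1) at_top"
  by (simp add: Phi_cdf PS.cdf_lim_at_top_prob)

lemma Phi_at_bot: "(Phi_std \<longlongrightarrow> 0) at_bot"
  by (simp add: Phi_cdf PS.cdf_lim_at_bot)

lemma std_even: "std_normal_density (- t) = std_normal_density t"
  by (simp add: std_normal_density_def)

lemma std_le1: "std_normal_density t \<le> 1"
proof -
  have "exp (- t\<^sup>2 / 2) \<le> 1" by simp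
  moreover have "1 / sqrt (2 * pi) \<le> 1"
    using pi_gt3 by (simp add: divide_le_eq_1 real_le_rsqrt)
  ultimately show ?thesis unfolding std_normal_density_def
    by (metis exp_ge_zero mult_le_one zero_le_divide_1_iff real_sqrt_ge_zero
        mult_nonneg_nonneg pi_ge_zero zero_le_numeral)
qed

lemma std_mono: "\<bar>t\<bar> \<le> M \<Longrightarrow> std_normal_density M \<le> std_normal_density t"
proof -
  assume h: "\<bar>t\<bar> \<le> M"
  have "\<bar>t\<bar>^2 \<le> M^2" using power_mono[OF h abs_ge_zero, of 2] by simp
  then show "std_normal_density M \<le> std_normal_density t" unfolding std_normal_density_def by (intro mult_left_mono) auto
qed

lemma Phi_lipschitz:
  assumes "x \<le> y" shows "Phi_std y - Phi_std x \<le> y - x"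
proof -
  have "ennreal (Phi_std y - Phi_std x) = (\<integral>\<^sup>+t. ennreal (std_normal_density t) * indicator {x<..y} t \<partial>lborel)"
    by (rule Phi_diff_emeasure[OF assms])
  also have "\<dots> \<le> (\<integral>\<^sup>+t. indicator {x<..y} t \<partial>lborel)"
    by (intro nn_integral_mono) (auto split: split_indicator simp: std_le1)
  also have "\<dots> = ennreal (y - x)" using assms by simp
  finally show ?thesis using assms by (simp add: ennreal_le_iff)
qed

lemma Phi_strict_mono:
  assumes "x < y" shows "Phi_std x < Phi_std y"
proof -
  define M where "M = max \<bar>x\<bar> \<bar>y\<bar>"
  have "ennreal (std_normal_density M * (y - x)) = (\<integral>\<^sup>+t. ennreal (std_normal_density M) * indicator {x<..y} t \<partial>lborel)"
    using assms by (subst nn_integral_cmult_indicator) (auto simp: ennreal_mult)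
  also have "\<dots> \<le> (\<integral>\<^sup>+t. ennreal (std_normal_density t) * indicator {x<..y} t \<partial>lborel)"
    by (intro nn_integral_mono) (auto split: split_indicator intro!: std_mono simp: M_def)
  also have "\<dots> = ennreal (Phi_std y - Phi_std x)"
    by (rule Phi_diff_emeasure[symmetric]) (use assms in auto)
  finally have "std_normal_density M * (y - x) \<le> Phi_std y - Phi_std x"
    using assms Phi_mono[of x y] by (simp add: ennreal_le_iff)
  moreover have "0 < std_normal_density M * (y - x)"
    using assms by (simp add: normal_density_pos)
  ultimately show ?thesis by simp
qed

lemma Phi_neg: "Phi_std (- x) = 1 - Phi_std x"
proof -
  have "emeasure PSM {..-x} = (\<integral>\<^sup>+t. ennreal (std_normal_density t) * indicator {..-x} t \<partial>lborel)"
    by (simp add: emeasure_PSM)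
  also have "\<dots> = (\<integral>\<^sup>+t. ennreal (std_normal_density (0 + (-1) * t)) * indicator {..-x} (0 + (-1) * t) \<partial>lborel)"
    by (subst nn_integral_real_affine[where c="-1" and t=0]) auto
  also have "\<dots> = (\<integral>\<^sup>+t. ennreal (std_normal_density t) * indicator {x..} t \<partial>lborel)"
    by (intro nn_integral_cong) (auto simp: std_even split: split_indicator)
  also have "\<dots> = emeasure PSM {x..}"
    by (simp add: emeasure_PSM)
  finally have "measure PSM {..-x} = measure PSM {x..}"
    by (simp add: PS.emeasure_eq_measure)
  also have "{x..} = space PSM - {..<x}" by auto
  also have "measure PSM (space PSM - {..<x}) = 1 - measure PSM {..<x}"
    by (rule PS.prob_compl) auto
  also have "{..<x} = {..x} - {x}" by auto
  also have "measure PSM ({..x} - {x}) = measure PSM {..x} - measure PSM {x}"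
    by (rule PS.finite_measure_Diff) auto
  finally show ?thesis by (simp add: Phi_std_def PSM_singleton)
qed

lemma Phi_zero: "Phi_std 0 = 1/2"
  using Phi_neg[of 0] by simp

lemma normal_density_affine_std:
  assumes "\<sigma> > 0" shows "normal_density \<mu> \<sigma> (\<mu> + \<sigma> * x) = std_normal_density x / \<sigma>"
proof -
  have "sqrt (2 * pi * \<sigma>\<^sup>2) = sqrt (2*pi) * \<sigma>" using assms by (simp add: real_sqrt_mult)
  moreover have "(\<sigma> * x)\<^sup>2 / (2 * \<sigma>\<^sup>2) = x\<^sup>2/2" using assms by (simp add: power_mult_distrib)
  ultimately show ?thesis unfolding normal_density_def std_normal_density_def
    by simp
qed

lemma normal_interval_nn:
  assumes "\<sigma> > 0" "a \<le> b"
  shows "(\<integral>\<^sup>+t. ennreal (normal_density \<mu> \<sigma> t) * indicator {a..b} t \<partial>lborel)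
     = ennreal (Phi_std ((b-\<mu>)/\<sigma>) - Phi_std ((a-\<mu>)/\<sigma>))"
proof -
  have ab: "(a-\<mu>)/\<sigma> \<le> (b-\<mu>)/\<sigma>" using assms by (simp add: divide_right_mono)
  have "(\<integral>\<^sup>+t. ennreal (normal_density \<mu> \<sigma> t) * indicator {a..b} t \<partial>lborel)
      = ennreal \<bar>\<sigma>\<bar> * (\<integral>\<^sup>+x. ennreal (normal_density \<mu> \<sigma> (\<mu> + \<sigma> * x)) * indicator {a..b} (\<mu> + \<sigma> * x) \<partial>lborel)"
    using assms by (subst nn_integral_real_affine[where c=\<sigma> and t=\<mu>]) auto
  also have "\<dots> = (\<integral>\<^sup>+x. ennreal \<sigma> * (ennreal (normal_density \<mu> \<sigma> (\<mu> + \<sigma> * x)) * indicator {a..b} (\<mu> + \<sigma> * x)) \<partial>lborel)"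
    using assms by (subst nn_integral_cmult) auto
  also have "\<dots> = (\<integral>\<^sup>+x. ennreal (std_normal_density x) * indicator {(a-\<mu>)/\<sigma>..(b-\<mu>)/\<sigma>} x \<partial>lborel)"
  proof (intro nn_integral_cong)
    fix x
    have "indicator {a..b} (\<mu> + \<sigma> * x) = (indicator {(a-\<mu>)/\<sigma>..(b-\<mu>)/\<sigma>} x :: ennreal)"
      using assms by (auto split: split_indicator simp: field_simps)
    moreover have "ennreal \<sigma> * ennreal (normal_density \<mu> \<sigma> (\<mu> + \<sigma> * x)) = ennreal (std_normal_density x)"
      using assms by (simp add: normal_density_affine_std ennreal_mult[symmetric])
    ultimately show "ennreal \<sigma> * (ennreal (normal_density \<mu> \<sigma> (\<mu> + \<sigma> * x)) * indicator {a..b} (\<mu> + \<sigma> * x)) =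
         ennreal (std_normal_density x) * indicator {(a - \<mu>) / \<sigma>..(b - \<mu>) / \<sigma>} x"
      by (simp add: mult.assoc[symmetric])
  qed
  also have "\<dots> = ennreal (Phi_std ((b-\<mu>)/\<sigma>) - Phi_std ((a-\<mu>)/\<sigma>))"
    by (rule Phi_diff_emeasure_cc[OF ab, symmetric])
  finally show ?thesis .
qed

lemma normal_interval:
  assumes "\<sigma> > 0" "a \<le> b"
  shows "(\<integral>t. normal_density \<mu> \<sigma> t * indicator {a..b} t \<partial>lborel)
     = Phi_std ((b-\<mu>)/\<sigma>) - Phi_std ((a-\<mu>)/\<sigma>)"
proof -
  have int: "integrable lborel (\<lambda>t. normal_density \<mu> \<sigma> t * indicator {a..b} t)"
    by (rule integrable_real_mult_indicator) (use assms in auto)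
  have ab: "(a-\<mu>)/\<sigma> \<le> (b-\<mu>)/\<sigma>" using assms by (simp add: divide_right_mono)
  have "ennreal (\<integral>t. normal_density \<mu> \<sigma> t * indicator {a..b} t \<partial>lborel)
      = (\<integral>\<^sup>+t. ennreal (normal_density \<mu> \<sigma> t * indicator {a..b} t) \<partial>lborel)"
    by (rule nn_integral_eq_integral[symmetric]) (use int in auto)
  also have "\<dots> = (\<integral>\<^sup>+t. ennreal (normal_density \<mu> \<sigma> t) * indicator {a..b} t \<partial>lborel)"
    by (intro nn_integral_cong) (auto split: split_indicator)
  finally have "ennreal (\<integral>t. normal_density \<mu> \<sigma> t * indicator {a..b} t \<partial>lborel) = ennreal (Phi_std ((b-\<mu>)/\<sigma>) - Phi_std ((a-\<mu>)/\<sigma>))"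
    using normal_interval_nn[OF assms, of \<mu>] by simp
  moreover have "0 \<le> (\<integral>t. normal_density \<mu> \<sigma> t * indicator {a..b} t \<partial>lborel)"
    by (intro integral_nonneg_AE) auto
  ultimately show ?thesis using Phi_mono[OF ab] by (subst (asm) ennreal_inj) auto
qed

lemma Phi_measurable[measurable]: "Phi_std \<in> borel_measurable borel"
  by (rule borel_measurable_mono) (auto simp: mono_def Phi_mono)

definition clipf :: "real \<Rightarrow> real \<Rightarrow> real" where
  "clipf k d = max (-k) (min k d)"

lemma clipf_measurable[measurable]: "clipf k \<in> borel_measurable borel"
  unfolding clipf_def[abs_def] by measurable

lemma gauss_identity:
  fixes s0 s1 :: real
  assumes s0: "s0 > 0" and s1: "s1 > 0"
  defines "s \<equiv> sqrt (s0\<^sup>2 + s1\<^sup>2)"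
  defines "w \<equiv> s0\<^sup>2 / (s0\<^sup>2 + s1\<^sup>2)" and "sd \<equiv> s0 * s1 / sqrt (s0\<^sup>2 + s1\<^sup>2)"
  shows "normal_density \<tau> s0 x0 * normal_density (\<tau> + \<Delta>) s1 (x0 + d)
       = normal_density \<Delta> s d * normal_density (\<tau> - w * (d - \<Delta>)) sd x0"
proof -
  define S where "S = s0\<^sup>2 + s1\<^sup>2"
  have S: "S > 0" using s0 s1 by (simp add: S_def add_pos_pos)
  have ss: "s\<^sup>2 = S" by (simp add: s_def S_def)
  have sdsq: "sd\<^sup>2 = s0\<^sup>2 * s1\<^sup>2 / S" unfolding sd_def S_def
    by (simp add: power_mult_distrib power_divide)
  have c1: "sqrt (2 * pi * s0\<^sup>2) * sqrt (2 * pi * s1\<^sup>2) = sqrt (2 * pi * s\<^sup>2) * sqrt (2 * pi * sd\<^sup>2)"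
  proof -
    have "sqrt (2 * pi * s0\<^sup>2) * sqrt (2 * pi * s1\<^sup>2) = sqrt ((2 * pi * s0\<^sup>2) * (2 * pi * s1\<^sup>2))"
      by (simp add: real_sqrt_mult)
    moreover have "sqrt (2 * pi * s\<^sup>2) * sqrt (2 * pi * sd\<^sup>2) = sqrt ((2 * pi * s\<^sup>2) * (2 * pi * sd\<^sup>2))"
      by (simp add: real_sqrt_mult)
    moreover have "(2 * pi * s0\<^sup>2) * (2 * pi * s1\<^sup>2) = (2 * pi * s\<^sup>2) * (2 * pi * sd\<^sup>2)"
      using S by (simp add: ss sdsq field_simps)
    ultimately show ?thesis by simp
  qed
  have e1: "-(x0 - \<tau>)\<^sup>2 / (2 * s0\<^sup>2) + -(x0 + d - (\<tau> + \<Delta>))\<^sup>2 / (2 * s1\<^sup>2)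
      = -(d - \<Delta>)\<^sup>2 / (2 * s\<^sup>2) + -(x0 - (\<tau> - w * (d - \<Delta>)))\<^sup>2 / (2 * sd\<^sup>2)"
    using s0 s1 S unfolding ss sdsq w_def S_def[symmetric]
    by (simp add: field_simps power2_eq_square) (simp add: S_def algebra_simps power2_eq_square)
  show ?thesis
    unfolding normal_density_def
    using c1 e1 by (simp add: exp_add[symmetric] field_simps)
qed

lemma M1:
  fixes s0 s1 :: real
  assumes s0: "s0 > 0" and s1: "s1 > 0" and r: "r \<ge> 0"
  defines "s \<equiv> sqrt (s0\<^sup>2 + s1\<^sup>2)"
  defines "w \<equiv> s0\<^sup>2 / (s0\<^sup>2 + s1\<^sup>2)" and "sd \<equiv> s0 * s1 / sqrt (s0\<^sup>2 + s1\<^sup>2)"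
  shows "measure (obs_law s0 s1 \<tau> \<Delta>) {(x0, x1). \<bar>x0 + w * clipf k (x1 - x0) - \<tau>\<bar> \<le> r}
    = (\<integral>d. normal_density \<Delta> s d * (Phi_std ((r - w * (\<Delta> - d + clipf k d)) / sd)
            - Phi_std ((- r - w * (\<Delta> - d + clipf k d)) / sd)) \<partial>lborel)"
proof -
  define S where "S = {(x0, x1). \<bar>x0 + w * clipf k (x1 - x0) - \<tau>\<bar> \<le> r}"
  define G where "G d = normal_density \<Delta> s d * (Phi_std ((r - w * (\<Delta> - d + clipf k d)) / sd)
            - Phi_std ((- r - w * (\<Delta> - d + clipf k d)) / sd))" for d
  define I where "I d = {\<tau> - w * clipf k d - r .. \<tau> - w * clipf k d + r}" for d
  have sd: "sd > 0" using s0 s1 unfolding sd_def by (intro divide_pos_pos mult_pos_pos) (auto intro!: add_pos_pos)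
  have Sm[measurable]: "S \<in> sets (lborel \<Otimes>\<^sub>M lborel)"
  proof -
    have "S = {p \<in> space (lborel \<Otimes>\<^sub>M lborel). \<bar>fst p + w * clipf k (snd p - fst p) - \<tau>\<bar> \<le> r}"
      by (auto simp: S_def space_pair_measure)
    also have "\<dots> \<in> sets (lborel \<Otimes>\<^sub>M lborel)" by measurable
    finally show ?thesis .
  qed
  define S' where "S' = {(x0, d). \<bar>x0 + w * clipf k d - \<tau>\<bar> \<le> r}"
  have Sm'[measurable]: "S' \<in> sets (lborel \<Otimes>\<^sub>M lborel)"
  proof -
    have "S' = {p \<in> space (lborel \<Otimes>\<^sub>M lborel). \<bar>fst p + w * clipf k (snd p) - \<tau>\<bar> \<le> r}"
      by (auto simp: S'_def space_pair_measure)
    also have "\<dots> \<in> sets (lborel \<Otimes>\<^sub>M lborel)" by measurable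
    finally show ?thesis .
  qed
  have Gm[measurable]: "G \<in> borel_measurable borel" unfolding G_def by measurable
  have G_nonneg: "0 \<le> G d" for d
    unfolding G_def using r sd
    by (intro mult_nonneg_nonneg normal_density_nonneg) (auto intro!: Phi_mono divide_right_mono)
  have G_le: "G d \<le> normal_density \<Delta> s d" for d
    unfolding G_def using Phi_le1[of "(r - w * (\<Delta> - d + clipf k d)) / sd"] Phi_nonneg[of "(- r - w * (\<Delta> - d + clipf k d)) / sd"]
    by (intro mult_left_le normal_density_nonneg) auto
  have Gint: "integrable lborel G"
  proof -
    have spos: "0 < s" using s0 s1 unfolding s_def by (auto intro!: add_pos_pos)
    show ?thesis
      by (intro Bochner_Integration.integrable_bound[OF integrable_normal_density[OF spos, of \<Delta>]]) (auto simp: G_nonneg G_le)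
  qed
  have "emeasure (obs_law s0 s1 \<tau> \<Delta>) S
      = (\<integral>\<^sup>+p. ennreal (normal_density \<tau> s0 (fst p) * normal_density (\<tau> + \<Delta>) s1 (snd p)) * indicator S p \<partial>(lborel \<Otimes>\<^sub>M lborel))"
    unfolding obs_law_def using Sm by (subst emeasure_density) (auto simp: case_prod_beta)
  also have "\<dots> = (\<integral>\<^sup>+x0. \<integral>\<^sup>+x1. ennreal (normal_density \<tau> s0 x0 * normal_density (\<tau> + \<Delta>) s1 x1) * indicator S (x0, x1) \<partial>lborel \<partial>lborel)"
    by (subst lborel.nn_integral_fst[symmetric]) auto
  also have "\<dots> = (\<integral>\<^sup>+x0. \<integral>\<^sup>+d. ennreal (normal_density \<tau> s0 x0 * normal_density (\<tau> + \<Delta>) s1 (x0 + 1 * d)) * indicator S (x0, x0 + 1 * d) \<partial>lborel \<partial>lborel)"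
  proof (rule nn_integral_cong)
    fix x0 :: real
    have m: "(\<lambda>x1. ennreal (normal_density \<tau> s0 x0 * normal_density (\<tau> + \<Delta>) s1 x1) * indicator S (x0, x1)) \<in> borel_measurable borel"
      using Sm by measurable
    show "(\<integral>\<^sup>+x1. ennreal (normal_density \<tau> s0 x0 * normal_density (\<tau> + \<Delta>) s1 x1) * indicator S (x0, x1) \<partial>lborel) = 
      (\<integral>\<^sup>+d. ennreal (normal_density \<tau> s0 x0 * normal_density (\<tau> + \<Delta>) s1 (x0 + 1 * d)) * indicator S (x0, x0 + 1 * d) \<partial>lborel)"
      using nn_integral_real_affine[OF m, where c=1 and t=x0] by simp
  qed
  also have "\<dots> = (\<integral>\<^sup>+x0. \<integral>\<^sup>+d. ennreal (normal_density \<Delta> s d) * (ennreal (normal_density (\<tau> - w * (d - \<Delta>)) sd x0) * indicator S' (x0, d)) \<partial>lborel \<partial>lborel)"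
  proof (intro nn_integral_cong)
    fix x0 d
    have "indicator S (x0, x0 + 1 * d) = (indicator S' (x0, d) :: ennreal)"
      by (auto simp: S_def S'_def split: split_indicator)
    then show "ennreal (normal_density \<tau> s0 x0 * normal_density (\<tau> + \<Delta>) s1 (x0 + 1 * d)) * indicator S (x0, x0 + 1 * d) =
         ennreal (normal_density \<Delta> s d) * (ennreal (normal_density (\<tau> - w * (d - \<Delta>)) sd x0) * indicator S' (x0, d))"
      using gauss_identity[OF s0 s1, of \<tau> x0 \<Delta> d]
      by (simp add: s_def w_def sd_def ennreal_mult mult.assoc)
  qed
  also have "\<dots> = (\<integral>\<^sup>+d. \<integral>\<^sup>+x0. ennreal (normal_density \<Delta> s d) * (ennreal (normal_density (\<tau> - w * (d - \<Delta>)) sd x0) * indicator S' (x0, d)) \<partial>lborel \<partial>lborel)"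
    apply (rule lborel_pair.Fubini'[symmetric])
    unfolding normal_density_def case_prod_beta prod.collapse using Sm' by measurable
  also have "\<dots> = (\<integral>\<^sup>+d. ennreal (G d) \<partial>lborel)"
  proof (intro nn_integral_cong)
    fix d
    have lohi: "\<tau> - w * clipf k d - r \<le> \<tau> - w * clipf k d + r" using r by simp
    have a1: "(\<tau> - w * clipf k d + r - (\<tau> - w * (d - \<Delta>))) / sd = (r - w * (\<Delta> - d + clipf k d)) / sd"
      by (simp add: algebra_simps)
    have a2: "(\<tau> - w * clipf k d - r - (\<tau> - w * (d - \<Delta>))) / sd = (- r - w * (\<Delta> - d + clipf k d)) / sd"
      by (simp add: algebra_simps)
    have "(\<integral>\<^sup>+x0. ennreal (normal_density \<Delta> s d) * (ennreal (normal_density (\<tau> - w * (d - \<Delta>)) sd x0) * indicator S' (x0, d)) \<partial>lborel)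
       = (\<integral>\<^sup>+x0. ennreal (normal_density \<Delta> s d) * (ennreal (normal_density (\<tau> - w * (d - \<Delta>)) sd x0) * indicator (I d) x0) \<partial>lborel)"
      by (intro nn_integral_cong) (auto simp: S'_def I_def split: split_indicator)
    also have "\<dots> = ennreal (normal_density \<Delta> s d) * (\<integral>\<^sup>+x0. ennreal (normal_density (\<tau> - w * (d - \<Delta>)) sd x0) * indicator (I d) x0 \<partial>lborel)"
      by (rule nn_integral_cmult) (simp add: I_def)
    also have "\<dots> = ennreal (normal_density \<Delta> s d) * ennreal (Phi_std ((r - w * (\<Delta> - d + clipf k d)) / sd)
            - Phi_std ((- r - w * (\<Delta> - d + clipf k d)) / sd))"
      unfolding I_def normal_interval_nn[OF sd lohi] a1 a2 ..
    also have "\<dots> = ennreal (G d)"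
      unfolding G_def using r sd
      by (subst ennreal_mult[symmetric]) (auto intro!: Phi_mono divide_right_mono)
    finally show "(\<integral>\<^sup>+x0. ennreal (normal_density \<Delta> s d) * (ennreal (normal_density (\<tau> - w * (d - \<Delta>)) sd x0) * indicator S' (x0, d)) \<partial>lborel) = ennreal (G d)" .
  qed
  also have "\<dots> = ennreal (\<integral>d. G d \<partial>lborel)"
    by (rule nn_integral_eq_integral[OF Gint]) (simp add: G_nonneg)
  finally have "emeasure (obs_law s0 s1 \<tau> \<Delta>) S = ennreal (\<integral>d. G d \<partial>lborel)" .
  then have "measure (obs_law s0 s1 \<tau> \<Delta>) S = (\<integral>d. G d \<partial>lborel)"
    by (simp add: measure_def integral_nonneg_AE G_nonneg)
  then show ?thesis unfolding S_def G_def .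
qed

lemma crit_props:
  assumes "0 < a" "a < 1/2"
  shows "Phi_std (crit a) = 1 - a" "crit a > 0"
proof -
  have "\<forall>\<^sub>F x in at_top. Phi_std x > 1 - a"
    using Phi_at_top assms by (intro order_tendstoD) auto
  then obtain X where X: "\<And>x. x \<ge> X \<Longrightarrow> Phi_std x > 1 - a"
    by (auto simp: eventually_at_top_linorder)
  define Y where "Y = max X 0"
  have "Phi_std 0 \<le> 1 - a" using assms Phi_zero by simp
  moreover have "1 - a \<le> Phi_std Y" using X[of Y] by (simp add: Y_def)
  moreover have "0 \<le> Y" by (simp add: Y_def)
  ultimately have "\<exists>x. 0 \<le> x \<and> x \<le> Y \<and> Phi_std x = 1 - a"
    by (intro IVT) (auto intro: Phi_isCont)
  then obtain x where x: "0 \<le> x" "x \<le> Y" "Phi_std x = 1 - a" by blast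
  have uniq: "y = x" if "Phi_std y = 1 - a" for y
  proof (rule ccontr)
    assume "y \<noteq> x"
    then have "y < x \<or> x < y" by auto
    then show False
    proof
      assume "y < x" then show False using Phi_strict_mono[of y x] that x(3) by linarith
    next
      assume "x < y" then show False using Phi_strict_mono[of x y] that x(3) by linarith
    qed
  qed
  have "crit a = x" unfolding crit_def
    apply (rule the_equality)
     apply (rule x(3))
    apply (erule uniq)
    done
  then show "Phi_std (crit a) = 1 - a" using x by simp
  show "crit a > 0"
  proof (rule ccontr)
    assume "\<not> crit a > 0"
    then have "Phi_std (crit a) \<le> Phi_std 0" by (intro Phi_mono) auto
    moreover have "Phi_std (crit a) = 1 - a" using \<open>crit a = x\<close> x(3) by simp
    ultimately show False using assms Phi_zero by linarith
  qed
qed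

definition FF :: "real \<Rightarrow> real \<Rightarrow> real" where
  "FF L m = Phi_std (L - m) - Phi_std (- L - m)"

definition wt :: "real \<Rightarrow> real \<Rightarrow> real" where "wt s0 s1 = s0\<^sup>2 / (s0\<^sup>2 + s1\<^sup>2)"
definition sdv :: "real \<Rightarrow> real \<Rightarrow> real" where "sdv s0 s1 = s0 * s1 / sqrt (s0\<^sup>2 + s1\<^sup>2)"

lemma FF_measurable[measurable]: "FF L \<in> borel_measurable borel"
  unfolding FF_def[abs_def] by measurable

lemma FF_nonneg: "L \<ge> 0 \<Longrightarrow> 0 \<le> FF L m"
  unfolding FF_def using Phi_mono[of "-L-m" "L-m"] by simp

lemma FF_le1: "FF L m \<le> 1"
  unfolding FF_def using Phi_le1[of "L-m"] Phi_nonneg[of "-L-m"] by simp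

lemma FF_even: "FF L (- m) = FF L m"
  unfolding FF_def using Phi_neg[of "L + m"] Phi_neg[of "-L + m"] by (simp add: algebra_simps)

lemma gam_wt: "s1 > 0 \<Longrightarrow> gam s0 s1 / (1 + gam s0 s1) = wt s0 s1"
  by (simp add: gam_def wt_def field_simps)

lemma powr_sdv0: 
  assumes "s0 > 0" "s1 > 0"
  shows "(1 + gam s0 s1) powr (-1/2) * s0 = sdv s0 s1"
proof -
  have "1 + gam s0 s1 = (s0\<^sup>2 + s1\<^sup>2) / s1\<^sup>2" using assms by (simp add: gam_def field_simps)
  moreover have "((s0\<^sup>2 + s1\<^sup>2) / s1\<^sup>2) powr (-1/2) = s1 / sqrt (s0\<^sup>2 + s1\<^sup>2)"
  proof -
    have pos: "0 < (s0\<^sup>2 + s1\<^sup>2) / s1\<^sup>2" using assms by (simp add: add_pos_pos)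
    have "((s0\<^sup>2 + s1\<^sup>2) / s1\<^sup>2) powr (-1/2) = 1 / sqrt ((s0\<^sup>2 + s1\<^sup>2) / s1\<^sup>2)"
    proof -
      have "((s0\<^sup>2 + s1\<^sup>2) / s1\<^sup>2) powr (-1/2) = inverse (((s0\<^sup>2 + s1\<^sup>2) / s1\<^sup>2) powr (1/2))"
        by (subst powr_minus[symmetric]) simp
      also have "((s0\<^sup>2 + s1\<^sup>2) / s1\<^sup>2) powr (1/2) = sqrt ((s0\<^sup>2 + s1\<^sup>2) / s1\<^sup>2)"
        by (rule powr_half_sqrt[OF less_imp_le[OF pos]])
      finally show ?thesis by (simp only: inverse_eq_divide)
    qed
    also have "sqrt ((s0\<^sup>2 + s1\<^sup>2) / s1\<^sup>2) = sqrt (s0\<^sup>2 + s1\<^sup>2) / s1"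
      using assms by (simp add: real_sqrt_divide)
    also have "1 / (sqrt (s0\<^sup>2 + s1\<^sup>2) / s1) = s1 / sqrt (s0\<^sup>2 + s1\<^sup>2)"
      by simp
    finally show ?thesis .
  qed
  ultimately have "(1 + gam s0 s1) powr (-1/2) = s1 / sqrt (s0\<^sup>2 + s1\<^sup>2)" by (simp only:)
  then show ?thesis by (simp add: sdv_def)
qed

lemma powr_sdv: 
  assumes "s0 > 0" "s1 > 0"
  shows "L * (1 + gam s0 s1) powr (-1/2) * s0 = L * sdv s0 s1"
  using powr_sdv0[OF assms] by (simp add: mult.assoc)

lemma clip_eq: "k \<ge> 0 \<Longrightarrow> d * (if \<bar>d\<bar> \<le> k then 1 else 0) + k * sgn d * (if \<bar>d\<bar> \<le> k then 0 else 1) = clipf k d"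
  unfolding clipf_def by (cases "\<bar>d\<bar> \<le> k"; cases "d > 0") (auto simp: sgn_if)

lemma aux_ring: "(x0::real) + ww * dd * aa + ww * ss * cc * gg * bb = x0 + ww * (dd * aa + (ss * cc) * gg * bb)"
  by (simp add: algebra_simps)

lemma tau_ST_eq:
  assumes "s1 > 0" "crit (\<alpha>/2) \<ge> 0" "sig s0 s1 \<ge> 0"
  shows "tau_ST s0 s1 \<alpha> x0 x1 = x0 + wt s0 s1 * clipf (sig s0 s1 * crit (\<alpha>/2)) (x1 - x0)"
proof -
  have k: "sig s0 s1 * crit (\<alpha>/2) \<ge> 0" using assms by simp
  show ?thesis
    unfolding tau_ST_def Let_def gam_wt[OF assms(1)] aux_ring clip_eq[OF k] ..
qed

lemma sig_pos: "s0 > 0 \<Longrightarrow> s1 > 0 \<Longrightarrow> sig s0 s1 > 0"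
  by (simp add: sig_def add_pos_pos)

lemma sdv_pos: "s0 > 0 \<Longrightarrow> s1 > 0 \<Longrightarrow> sdv s0 s1 > 0"
  by (simp add: sdv_def add_pos_pos)

definition mfun :: "real \<Rightarrow> real \<Rightarrow> real \<Rightarrow> real \<Rightarrow> real \<Rightarrow> real" where
  "mfun s0 s1 k \<Delta> d = wt s0 s1 * (\<Delta> - d + clipf k d) / sdv s0 s1"

lemma mfun_measurable[measurable]: "mfun s0 s1 k \<Delta> \<in> borel_measurable borel"
  unfolding mfun_def[abs_def] by measurable

lemma cov_rep:
  assumes s0: "s0 > 0" and s1: "s1 > 0" and L: "L \<ge> 0" and c: "crit (\<alpha>/2) \<ge> 0"
  shows "cov_ST s0 s1 \<alpha> \<tau> \<Delta> L = (\<integral>d. normal_density \<Delta> (sig s0 s1) d *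
      FF L (mfun s0 s1 (sig s0 s1 * crit (\<alpha>/2)) \<Delta> d) \<partial>lborel)"
proof -
  define k where "k = sig s0 s1 * crit (\<alpha>/2)"
  define sd where "sd = sdv s0 s1"
  have sd: "sd > 0" using sdv_pos[OF s0 s1] by (simp add: sd_def)
  have "cov_ST s0 s1 \<alpha> \<tau> \<Delta> L = measure (obs_law s0 s1 \<tau> \<Delta>)
       {(x0, x1). \<bar>x0 + wt s0 s1 * clipf k (x1 - x0) - \<tau>\<bar> \<le> L * sd}"
    unfolding cov_ST_def powr_sdv[OF s0 s1] tau_ST_eq[OF s1 c less_imp_le[OF sig_pos[OF s0 s1]]] k_def sd_def ..
  also have "\<dots> = (\<integral>d. normal_density \<Delta> (sig s0 s1) d * (Phi_std ((L * sd - wt s0 s1 * (\<Delta> - d + clipf k d)) / sd)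
            - Phi_std ((- (L * sd) - wt s0 s1 * (\<Delta> - d + clipf k d)) / sd)) \<partial>lborel)"
  proof -
    have Lsd: "0 \<le> L * (s0 * s1 / sqrt (s0\<^sup>2 + s1\<^sup>2))"
      using mult_nonneg_nonneg[OF L less_imp_le[OF sd]] by (simp only: sd_def sdv_def)
    show ?thesis unfolding wt_def sd_def sdv_def sig_def by (rule M1[OF s0 s1 Lsd])
  qed
  also have "\<dots> = (\<integral>d. normal_density \<Delta> (sig s0 s1) d * FF L (mfun s0 s1 k \<Delta> d) \<partial>lborel)"
  proof (rule Bochner_Integration.integral_cong[OF refl])
    fix d
    have e1: "(L * sd - wt s0 s1 * (\<Delta> - d + clipf k d)) / sd = L - mfun s0 s1 k \<Delta> d"
      using sd by (simp add: mfun_def sd_def field_simps)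
    have e2: "(- (L * sd) - wt s0 s1 * (\<Delta> - d + clipf k d)) / sd = - L - mfun s0 s1 k \<Delta> d"
      using sd by (simp add: mfun_def sd_def field_simps)
    show "normal_density \<Delta> (sig s0 s1) d * (Phi_std ((L * sd - wt s0 s1 * (\<Delta> - d + clipf k d)) / sd)
            - Phi_std ((- (L * sd) - wt s0 s1 * (\<Delta> - d + clipf k d)) / sd)) =
          normal_density \<Delta> (sig s0 s1) d * FF L (mfun s0 s1 k \<Delta> d)"
      unfolding e1 e2 FF_def ..
  qed
  finally show ?thesis by (simp add: k_def)
qed

definition Rint :: "real \<Rightarrow> real \<Rightarrow> real \<Rightarrow> real \<Rightarrow> real \<Rightarrow> real" where
  "Rint s0 s1 k L \<Delta> = (\<integral>d. normal_density \<Delta> (sig s0 s1) d * FF L (mfun s0 s1 k \<Delta> d) \<partial>lborel)"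

lemma nd_cong: "(x - \<mu>)\<^sup>2 = (y - \<nu>)\<^sup>2 \<Longrightarrow> normal_density \<mu> \<sigma> x = normal_density \<nu> \<sigma> y"
  by (simp add: normal_density_def)

lemma clipf_neg: "k \<ge> 0 \<Longrightarrow> clipf k (- x) = - clipf k x"
  by (auto simp: clipf_def max_def min_def)

lemma R_sym:
  assumes k: "k \<ge> 0"
  shows "Rint s0 s1 k L (- \<Delta>) = Rint s0 s1 k L \<Delta>"
proof -
  have "Rint s0 s1 k L (- \<Delta>) = \<bar>-1\<bar> *\<^sub>R (\<integral>x. normal_density (-\<Delta>) (sig s0 s1) (0 + (-1) * x) * FF L (mfun s0 s1 k (-\<Delta>) (0 + (-1) * x)) \<partial>lborel)"
    unfolding Rint_def by (rule lborel_integral_real_affine) simp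
  also have "\<dots> = Rint s0 s1 k L \<Delta>"
  proof -
    have A: "normal_density (-\<Delta>) (sig s0 s1) (- x) = normal_density \<Delta> (sig s0 s1) x" for x
      by (rule nd_cong) (simp add: power2_eq_square algebra_simps)
    have B: "mfun s0 s1 k (-\<Delta>) (- x) = - mfun s0 s1 k \<Delta> x" for x
      unfolding mfun_def clipf_neg[OF k] by (simp add: algebra_simps minus_divide_left)
    show ?thesis unfolding Rint_def by (simp add: A B FF_even)
  qed
  finally show ?thesis .
qed

lemma std_interval: "a \<le> b \<Longrightarrow> (\<integral>t. std_normal_density t * indicator {a..b} t \<partial>lborel) = Phi_std b - Phi_std a"
  using normal_interval[of 1 a b 0] by simp

lemma std_integrable_ind: "integrable lborel (\<lambda>t. std_normal_density t * indicator {a..b} t)"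
  by (rule integrable_real_mult_indicator) auto

lemma FF_mono:
  assumes L: "L \<ge> 0" and m: "0 \<le> m1" "m1 \<le> m2"
  shows "FF L m2 \<le> FF L m1"
proof -
  have I1: "Phi_std (L - m1) - Phi_std (L - m2) = (\<integral>t. std_normal_density t * indicator {L-m2..L-m1} t \<partial>lborel)"
    using m by (subst std_interval) auto
  have "Phi_std (-L - m1) - Phi_std (-L - m2) = (\<integral>t. std_normal_density t * indicator {-L-m2..-L-m1} t \<partial>lborel)"
    using m by (subst std_interval) auto
  also have "\<dots> = \<bar>1\<bar> *\<^sub>R (\<integral>u. std_normal_density (-2*L + 1 * u) * indicator {-L-m2..-L-m1} (-2*L + 1 * u) \<partial>lborel)"
    by (rule lborel_integral_real_affine) simp
  also have "\<dots> = (\<integral>u. std_normal_density (u - 2*L) * indicator {L-m2..L-m1} u \<partial>lborel)"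
    by (simp add: indicator_def algebra_simps)
  also have "\<dots> \<le> (\<integral>t. std_normal_density t * indicator {L-m2..L-m1} t \<partial>lborel)"
  proof (rule integral_mono)
    show "integrable lborel (\<lambda>u. std_normal_density (u - 2*L) * indicator {L-m2..L-m1} u)"
    proof (rule integrable_real_mult_indicator)
      show "integrable lborel (\<lambda>u. std_normal_density (u - 2*L))"
        using lborel_integrable_real_affine[OF integrable_normal_density[of 1 0], of 1 "-2*L"] by simp
    qed auto
    show "integrable lborel (\<lambda>t. std_normal_density t * indicator {L-m2..L-m1} t)"
      by (rule std_integrable_ind)
    fix u
    show "std_normal_density (u - 2*L) * indicator {L-m2..L-m1} u \<le> std_normal_density u * indicator {L-m2..L-m1} u"
    proof (cases "u \<in> {L-m2..L-m1}")
      case True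
      then have "u \<le> L" using m by auto
      then have "\<bar>u\<bar> \<le> \<bar>u - 2*L\<bar>" using L by auto
      then have "std_normal_density \<bar>u - 2*L\<bar> \<le> std_normal_density u" by (rule std_mono)
      moreover have "std_normal_density \<bar>u - 2*L\<bar> = std_normal_density (u - 2*L)"
        by (simp add: std_normal_density_def)
      ultimately show ?thesis using True by simp
    qed simp
  qed
  finally show ?thesis unfolding FF_def using I1 by linarith
qed

lemma int_nd_bounded:
  fixes f :: "real \<Rightarrow> real"
  assumes "\<sigma> > 0" and [measurable]: "f \<in> borel_measurable borel" and B: "\<And>x. \<bar>f x\<bar> \<le> B"
  shows "integrable lborel (\<lambda>x. normal_density \<mu> \<sigma> x * f x)"
proof (rule Bochner_Integration.integrable_bound)
  show "integrable lborel (\<lambda>x. B * normal_density \<mu> \<sigma> x)"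
    using integrable_normal_density[OF assms(1)] by (rule integrable_mult_right)
  show "(\<lambda>x. normal_density \<mu> \<sigma> x * f x) \<in> borel_measurable lborel" by measurable
  show "AE x in lborel. norm (normal_density \<mu> \<sigma> x * f x) \<le> norm (B * normal_density \<mu> \<sigma> x)"
  proof (rule AE_I2)
    fix x
    have "\<bar>normal_density \<mu> \<sigma> x * f x\<bar> = normal_density \<mu> \<sigma> x * \<bar>f x\<bar>" by (simp add: abs_mult)
    also have "\<dots> \<le> normal_density \<mu> \<sigma> x * B" by (intro mult_left_mono B) simp
    also have "\<dots> \<le> \<bar>B * normal_density \<mu> \<sigma> x\<bar>"
      using mult_left_mono[OF abs_ge_self[of B] normal_density_nonneg[of \<mu> \<sigma> x]] by (simp add: abs_mult mult.commute)
    finally show "norm (normal_density \<mu> \<sigma> x * f x) \<le> norm (B * normal_density \<mu> \<sigma> x)" by simp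
  qed
qed

lemma subst_refl: "(\<integral>x. f x \<partial>lborel) = (\<integral>v. f (t - v) \<partial>lborel)" for f :: "real \<Rightarrow> real"
  using lborel_integral_real_affine[of "-1" f t] by simp

definition EE :: "real \<Rightarrow> real \<Rightarrow> real \<Rightarrow> real \<Rightarrow> real" where
  "EE s0 s1 L x = FF L (wt s0 s1 * x / sdv s0 s1)"

lemma EE_measurable[measurable]: "EE s0 s1 L \<in> borel_measurable borel"
  unfolding EE_def[abs_def] by measurable

lemma EE_bound: "L \<ge> 0 \<Longrightarrow> \<bar>EE s0 s1 L x\<bar> \<le> 1"
  unfolding EE_def using FF_nonneg[of L] FF_le1[of L] by (simp add: abs_le_iff)

lemma mfun_split:
  assumes k: "k \<ge> 0"
  shows "FF L (mfun s0 s1 k \<Delta> d) = EE s0 s1 L (min (\<Delta> + k - d) \<Delta>) + EE s0 s1 L (max (\<Delta> - d - k) \<Delta>) - EE s0 s1 L \<Delta>"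
proof -
  have "d > k \<or> d < -k \<or> (\<bar>d\<bar> \<le> k)" by auto
  then show ?thesis
  proof (elim disjE)
    assume h: "d > k"
    then have "clipf k d = k" "min (\<Delta> + k - d) \<Delta> = \<Delta> - d + k" "max (\<Delta> - d - k) \<Delta> = \<Delta>"
      using k by (auto simp: clipf_def)
    then show ?thesis by (simp add: mfun_def EE_def)
  next
    assume h: "d < -k"
    then have "clipf k d = -k" "min (\<Delta> + k - d) \<Delta> = \<Delta>" "max (\<Delta> - d - k) \<Delta> = \<Delta> - d + - k"
      using k by (auto simp: clipf_def)
    then show ?thesis by (simp add: mfun_def EE_def)
  next
    assume h: "\<bar>d\<bar> \<le> k"
    then have "clipf k d = d" "min (\<Delta> + k - d) \<Delta> = \<Delta>" "max (\<Delta> - d - k) \<Delta> = \<Delta>"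
      by (auto simp: clipf_def)
    then show ?thesis by (simp add: mfun_def EE_def)
  qed
qed

lemma R_M2:
  assumes s0: "s0 > 0" and s1: "s1 > 0" and L: "L \<ge> 0" and k: "k \<ge> 0"
  shows "Rint s0 s1 k L \<Delta> = (\<integral>v. normal_density k (sig s0 s1) v * EE s0 s1 L (min v \<Delta>)
      + normal_density (-k) (sig s0 s1) v * (EE s0 s1 L (max v \<Delta>) - EE s0 s1 L \<Delta>) \<partial>lborel)"
proof -
  define s where "s = sig s0 s1"
  have sp: "s > 0" using sig_pos[OF s0 s1] by (simp add: s_def)
  define E where "E = EE s0 s1 L"
  have Eb: "\<bar>E x\<bar> \<le> 1" for x using EE_bound[OF L] by (simp add: E_def)
  have Em[measurable]: "E \<in> borel_measurable borel" by (simp add: E_def)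
  define f1 where "f1 d = normal_density \<Delta> s d * E (min (\<Delta> + k - d) \<Delta>)" for d
  define f2 where "f2 d = normal_density \<Delta> s d * E (max (\<Delta> - d - k) \<Delta>)" for d
  define f3 where "f3 d = normal_density \<Delta> s d * E \<Delta>" for d
  define g1 where "g1 v = normal_density k s v * E (min v \<Delta>)" for v
  define g2 where "g2 v = normal_density (-k) s v * E (max v \<Delta>)" for v
  define g3 where "g3 v = normal_density (-k) s v * E \<Delta>" for v
  have i1: "integrable lborel f1" unfolding f1_def by (rule int_nd_bounded[OF sp _ Eb]) measurable
  have i2: "integrable lborel f2" unfolding f2_def by (rule int_nd_bounded[OF sp _ Eb]) measurable
  have i3: "integrable lborel f3" unfolding f3_def by (rule int_nd_bounded[OF sp _ Eb]) measurable
  have j1: "integrable lborel g1" unfolding g1_def by (rule int_nd_bounded[OF sp _ Eb]) measurable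
  have j2: "integrable lborel g2" unfolding g2_def by (rule int_nd_bounded[OF sp _ Eb]) measurable
  have j3: "integrable lborel g3" unfolding g3_def by (rule int_nd_bounded[OF sp _ Eb]) measurable
  have "Rint s0 s1 k L \<Delta> = (\<integral>d. f1 d + f2 d - f3 d \<partial>lborel)"
    unfolding Rint_def
  proof (rule Bochner_Integration.integral_cong[OF refl])
    fix d show "normal_density \<Delta> (sig s0 s1) d * FF L (mfun s0 s1 k \<Delta> d) = f1 d + f2 d - f3 d"
      unfolding mfun_split[OF k] f1_def f2_def f3_def s_def E_def by (simp add: algebra_simps)
  qed
  also have "\<dots> = (\<integral>d. f1 d \<partial>lborel) + (\<integral>d. f2 d \<partial>lborel) - (\<integral>d. f3 d \<partial>lborel)"
    using i1 i2 i3 by simp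
  also have "(\<integral>d. f1 d \<partial>lborel) = (\<integral>v. g1 v \<partial>lborel)"
  proof -
    have "(\<integral>d. f1 d \<partial>lborel) = (\<integral>v. f1 (\<Delta> + k - v) \<partial>lborel)" by (rule subst_refl)
    also have "\<dots> = (\<integral>v. g1 v \<partial>lborel)"
    proof (rule Bochner_Integration.integral_cong[OF refl])
      fix v
      have "normal_density \<Delta> s (\<Delta> + k - v) = normal_density k s v"
        by (rule nd_cong) (simp add: power2_eq_square algebra_simps)
      then show "f1 (\<Delta> + k - v) = g1 v" by (simp add: f1_def g1_def)
    qed
    finally show ?thesis .
  qed
  also have "(\<integral>d. f2 d \<partial>lborel) = (\<integral>v. g2 v \<partial>lborel)"
  proof -
    have "(\<integral>d. f2 d \<partial>lborel) = (\<integral>v. f2 (\<Delta> - k - v) \<partial>lborel)" by (rule subst_refl)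
    also have "\<dots> = (\<integral>v. g2 v \<partial>lborel)"
    proof (rule Bochner_Integration.integral_cong[OF refl])
      fix v
      have "normal_density \<Delta> s (\<Delta> - k - v) = normal_density (-k) s v"
        by (rule nd_cong) (simp add: power2_eq_square algebra_simps)
      then show "f2 (\<Delta> - k - v) = g2 v" by (simp add: f2_def g2_def)
    qed
    finally show ?thesis .
  qed
  also have "(\<integral>d. f3 d \<partial>lborel) = (\<integral>v. g3 v \<partial>lborel)"
    unfolding f3_def g3_def using sp by simp
  also have "(\<integral>v. g1 v \<partial>lborel) + (\<integral>v. g2 v \<partial>lborel) - (\<integral>v. g3 v \<partial>lborel) = (\<integral>v. g1 v + g2 v - g3 v \<partial>lborel)"
    using j1 j2 j3 by simp
  also have "\<dots> = (\<integral>v. normal_density k (sig s0 s1) v * EE s0 s1 L (min v \<Delta>)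
      + normal_density (-k) (sig s0 s1) v * (EE s0 s1 L (max v \<Delta>) - EE s0 s1 L \<Delta>) \<partial>lborel)"
    unfolding g1_def g2_def g3_def s_def E_def by (simp add: algebra_simps)
  finally show ?thesis .
qed

lemma nd_le: "(x - \<mu>)\<^sup>2 \<le> (y - \<nu>)\<^sup>2 \<Longrightarrow> normal_density \<nu> \<sigma> y \<le> normal_density \<mu> \<sigma> x"
  unfolding normal_density_def
  by (intro mult_left_mono) (auto intro!: divide_right_mono)

lemma EE_mono:
  assumes s0: "s0 > 0" and s1: "s1 > 0" and L: "L \<ge> 0" and xy: "0 \<le> x" "x \<le> y"
  shows "EE s0 s1 L y \<le> EE s0 s1 L x"
proof -
  have w: "wt s0 s1 \<ge> 0" by (simp add: wt_def)
  have sd: "sdv s0 s1 > 0" by (rule sdv_pos[OF s0 s1])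
  have "0 \<le> wt s0 s1 * x / sdv s0 s1" using w xy sd by simp
  moreover have "wt s0 s1 * x / sdv s0 s1 \<le> wt s0 s1 * y / sdv s0 s1"
    using w xy sd by (intro divide_right_mono mult_left_mono) auto
  ultimately show ?thesis unfolding EE_def by (rule FF_mono[OF L])
qed

lemma R_mono:
  assumes s0: "s0 > 0" and s1: "s1 > 0" and L: "L \<ge> 0" and k: "k \<ge> 0"
    and D: "0 \<le> \<Delta>1" "\<Delta>1 \<le> \<Delta>2"
  shows "Rint s0 s1 k L \<Delta>2 \<le> Rint s0 s1 k L \<Delta>1"
proof -
  define s where "s = sig s0 s1"
  have sp: "s > 0" using sig_pos[OF s0 s1] by (simp add: s_def)
  define E where "E = EE s0 s1 L"
  have Eb: "\<bar>E x\<bar> \<le> 1" for x using EE_bound[OF L] by (simp add: E_def)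
  have Em[measurable]: "E \<in> borel_measurable borel" by (simp add: E_def)
  have Emono: "E y \<le> E x" if "0 \<le> x" "x \<le> y" for x y
    unfolding E_def by (rule EE_mono[OF s0 s1 L that])
  define q where "q \<Delta> v = normal_density k s v * E (min v \<Delta>) + normal_density (-k) s v * (E (max v \<Delta>) - E \<Delta>)" for \<Delta> v
  have qi: "integrable lborel (q \<Delta>)" for \<Delta>
  proof -
    have "integrable lborel (\<lambda>v. normal_density k s v * E (min v \<Delta>))"
      by (rule int_nd_bounded[OF sp _ Eb]) measurable
    moreover have "integrable lborel (\<lambda>v. normal_density (-k) s v * (E (max v \<Delta>) - E \<Delta>))"
    proof (rule int_nd_bounded[OF sp])
      fix x show "\<bar>E (max x \<Delta>) - E \<Delta>\<bar> \<le> 2" using Eb[of "max x \<Delta>"] Eb[of \<Delta>] by linarith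
    qed measurable
    ultimately show ?thesis unfolding q_def[abs_def] by (rule Bochner_Integration.integrable_add)
  qed
  have R: "Rint s0 s1 k L \<Delta> = (\<integral>v. q \<Delta> v \<partial>lborel)" for \<Delta>
    unfolding R_M2[OF s0 s1 L k] q_def s_def E_def ..
  have "(\<integral>v. q \<Delta>2 v \<partial>lborel) \<le> (\<integral>v. q \<Delta>1 v \<partial>lborel)"
  proof (rule integral_mono[OF qi qi])
    fix v
    define a where "a = normal_density k s v"
    define b where "b = normal_density (-k) s v"
    have ab: "b \<le> a" if "v \<ge> 0"
      unfolding a_def b_def using that k by (intro nd_le) (simp add: power2_eq_square algebra_simps)
    consider "v \<le> \<Delta>1" | "\<Delta>1 < v" "v \<le> \<Delta>2" | "\<Delta>2 < v" by linarith
    then show "q \<Delta>2 v \<le> q \<Delta>1 v"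
    proof cases
      case 1
      then show ?thesis using D by (simp add: q_def)
    next
      case 2
      then have "q \<Delta>1 v - q \<Delta>2 v = (a - b) * (E \<Delta>1 - E v)"
        by (simp add: q_def a_def b_def algebra_simps)
      moreover have "0 \<le> (a - b) * (E \<Delta>1 - E v)"
        using ab[of] 2 D Emono[of \<Delta>1 v] by (intro mult_nonneg_nonneg) auto
      ultimately show ?thesis by linarith
    next
      case 3
      then have "q \<Delta>1 v - q \<Delta>2 v = (a - b) * (E \<Delta>1 - E \<Delta>2)"
        using D by (simp add: q_def a_def b_def algebra_simps)
      moreover have "0 \<le> (a - b) * (E \<Delta>1 - E \<Delta>2)"
        using ab 3 D Emono[of \<Delta>1 \<Delta>2] by (intro mult_nonneg_nonneg) auto
      ultimately show ?thesis by linarith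
    qed
  qed
  then show ?thesis unfolding R .
qed

lemma param_ids:
  assumes s0: "s0 > 0" and s1: "s1 > 0"
  defines "g \<equiv> gam s0 s1"
  shows "s0 / sig s0 s1 = sqrt (g / (1 + g))"
    and "wt s0 s1 * s0 / sdv s0 s1 = g / sqrt (1 + g)"
    and "wt s0 s1 * sig s0 s1 / sdv s0 s1 = sqrt g"
proof -
  define S where "S = s0\<^sup>2 + s1\<^sup>2"
  have S: "S > 0" using s0 s1 by (simp add: S_def add_pos_pos)
  have sS: "sig s0 s1 = sqrt S" by (simp add: sig_def S_def)
  have sqS: "sqrt S * sqrt S = S" using S by simp
  have g1: "1 + g = S / s1\<^sup>2" using s1 by (simp add: g_def gam_def S_def field_simps)
  have gS: "g / (1 + g) = s0\<^sup>2 / S" using s1 S by (simp add: g1 g_def gam_def field_simps S_def)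
  have sq1: "sqrt (1 + g) = sqrt S / s1" using s1 by (simp add: g1 real_sqrt_divide)
  have sqg: "sqrt g = s0 / s1" using s0 s1 by (simp add: g_def gam_def real_sqrt_divide)
  show "s0 / sig s0 s1 = sqrt (g / (1 + g))"
    unfolding gS sS using s0 by (simp add: real_sqrt_divide)
  show "wt s0 s1 * s0 / sdv s0 s1 = g / sqrt (1 + g)"
  proof -
    have Sp: "sqrt S > 0" using S by simp
    have "g / sqrt (1 + g) = s0\<^sup>2 / (s1 * sqrt S)"
      unfolding sq1 using s1 Sp by (simp add: g_def gam_def field_simps power2_eq_square)
    moreover have "wt s0 s1 * s0 / sdv s0 s1 = s0\<^sup>2 / (s1 * sqrt S)"
      unfolding wt_def sdv_def S_def[symmetric]
      using s0 s1 Sp sqS by (simp add: field_simps power2_eq_square)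
    ultimately show ?thesis by simp
  qed
  show "wt s0 s1 * sig s0 s1 / sdv s0 s1 = sqrt g"
    unfolding sqg wt_def sdv_def sS S_def[symmetric]
    using s0 s1 S sqS by (simp add: field_simps power2_eq_square)
qed

lemma formula_ii:
  assumes s0: "s0 > 0" and s1: "s1 > 0" and L: "L \<ge> 0" and c0: "crit (\<alpha>/2) \<ge> 0"
  defines "g \<equiv> gam s0 s1" and "c \<equiv> crit (\<alpha>/2)"
  shows "cov_ST s0 s1 \<alpha> \<tau> (t * s0) L =
          (Phi_std (c - sqrt (g/(1+g)) * t) - Phi_std (-c - sqrt (g/(1+g)) * t)) *
          (Phi_std (L - g / sqrt (1+g) * t) - Phi_std (-L - g / sqrt (1+g) * t))
        + (LBINT u=-\<infinity>..ereal (-c - sqrt (g/(1+g)) * t).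
              (Phi_std (L + sqrt g * (u + c)) - Phi_std (-L + sqrt g * (u + c))) * phi_std u)
        + (LBINT u=ereal (c - sqrt (g/(1+g)) * t)..\<infinity>.
              (Phi_std (L + sqrt g * (u - c)) - Phi_std (-L + sqrt g * (u - c))) * phi_std u)"
proof -
  define s where "s = sig s0 s1"
  have sp: "s > 0" using sig_pos[OF s0 s1] by (simp add: s_def)
  define \<Delta> where "\<Delta> = t * s0"
  define k where "k = s * c"
  define a0 where "a0 = -c - sqrt (g/(1+g)) * t"
  define b0 where "b0 = c - sqrt (g/(1+g)) * t"
  define M where "M = Phi_std (L - g / sqrt (1+g) * t) - Phi_std (-L - g / sqrt (1+g) * t)"
  define H1 where "H1 u = Phi_std (L + sqrt g * (u + c)) - Phi_std (-L + sqrt g * (u + c))" for u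
  define H2 where "H2 u = Phi_std (L + sqrt g * (u - c)) - Phi_std (-L + sqrt g * (u - c))" for u
  have cc: "c \<ge> 0" using c0 by (simp add: c_def)
  have ab: "a0 \<le> b0" using cc by (simp add: a0_def b0_def)
  have P1: "\<Delta> / s = sqrt (g/(1+g)) * t"
  proof -
    have "\<Delta> / s = (s0 / s) * t" by (simp add: \<Delta>_def)
    also have "s0 / s = sqrt (g/(1+g))" unfolding s_def g_def by (rule param_ids(1)[OF s0 s1])
    finally show ?thesis .
  qed
  have P2: "wt s0 s1 * \<Delta> / sdv s0 s1 = g / sqrt (1+g) * t"
  proof -
    have "wt s0 s1 * \<Delta> / sdv s0 s1 = (wt s0 s1 * s0 / sdv s0 s1) * t" by (simp add: \<Delta>_def)
    also have "wt s0 s1 * s0 / sdv s0 s1 = g / sqrt (1+g)" unfolding g_def by (rule param_ids(2)[OF s0 s1])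
    finally show ?thesis .
  qed
  have P3: "wt s0 s1 * s / sdv s0 s1 = sqrt g"
    unfolding s_def g_def by (rule param_ids(3)[OF s0 s1])
  have sd: "sdv s0 s1 > 0" by (rule sdv_pos[OF s0 s1])
  have scale: "wt s0 s1 * (s * y) / sdv s0 s1 = sqrt g * y" for y
  proof -
    have "wt s0 s1 * (s * y) / sdv s0 s1 = (wt s0 s1 * s / sdv s0 s1) * y" using sd by (simp add: field_simps)
    then show ?thesis unfolding P3 by simp
  qed
  define T1 where "T1 u = std_normal_density u * indicator {a0..b0} u * M" for u
  define T2 where "T2 u = indicator {..<a0} u *\<^sub>R (H1 u * phi_std u)" for u
  define T3 where "T3 u = indicator {b0<..} u *\<^sub>R (H2 u * phi_std u)" for u
  have Hb: "\<bar>H1 u\<bar> \<le> 1" "\<bar>H2 u\<bar> \<le> 1" "\<bar>M\<bar> \<le> 1" for u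
    unfolding H1_def H2_def M_def using Phi_le1 Phi_nonneg
    by (smt (verit))+
  have iT1: "integrable lborel T1"
    unfolding T1_def by (intro integrable_mult_left std_integrable_ind)
  have iT2: "integrable lborel T2"
  proof -
    have "integrable lborel (\<lambda>u. normal_density 0 1 u * (indicator {..<a0} u * H1 u))"
    proof (rule int_nd_bounded[where B=1])
      show "(\<lambda>u. indicator {..<a0} u * H1 u) \<in> borel_measurable borel" unfolding H1_def by measurable
      fix x show "\<bar>indicator {..<a0} x * H1 x\<bar> \<le> 1" using Hb(1)[of x] by (auto simp: indicator_def)
    qed simp
    then show ?thesis unfolding T2_def phi_std_def by (simp add: mult_ac)
  qed
  have iT3: "integrable lborel T3"
  proof -
    have "integrable lborel (\<lambda>u. normal_density 0 1 u * (indicator {b0<..} u * H2 u))"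
    proof (rule int_nd_bounded[where B=1])
      show "(\<lambda>u. indicator {b0<..} u * H2 u) \<in> borel_measurable borel" unfolding H2_def by measurable
      fix x show "\<bar>indicator {b0<..} x * H2 x\<bar> \<le> 1" using Hb(2)[of x] by (auto simp: indicator_def)
    qed simp
    then show ?thesis unfolding T3_def phi_std_def by (simp add: mult_ac)
  qed
  have "cov_ST s0 s1 \<alpha> \<tau> (t * s0) L = (\<integral>d. normal_density \<Delta> s d * FF L (mfun s0 s1 k \<Delta> d) \<partial>lborel)"
    unfolding cov_rep[OF s0 s1 L c0] by (simp add: s_def k_def c_def \<Delta>_def)
  also have "\<dots> = \<bar>s\<bar> *\<^sub>R (\<integral>u. normal_density \<Delta> s (\<Delta> + s * u) * FF L (mfun s0 s1 k \<Delta> (\<Delta> + s * u)) \<partial>lborel)"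
    using sp by (intro lborel_integral_real_affine) simp
  also have "\<dots> = (\<integral>u. s * (normal_density \<Delta> s (\<Delta> + s * u) * FF L (mfun s0 s1 k \<Delta> (\<Delta> + s * u))) \<partial>lborel)"
    using sp by simp
  also have "\<dots> = (\<integral>u. T1 u + T2 u + T3 u \<partial>lborel)"
  proof (rule Bochner_Integration.integral_cong[OF refl])
    fix u
    have nd: "s * normal_density \<Delta> s (\<Delta> + s * u) = std_normal_density u"
      using sp by (simp add: normal_density_affine_std)
    have mf: "mfun s0 s1 k \<Delta> (\<Delta> + s * u) = wt s0 s1 * (clipf k (\<Delta> + s * u) - s * u) / sdv s0 s1"
      by (simp add: mfun_def)
    have ua: "u < a0 \<longleftrightarrow> \<Delta> + s * u < - k"
    proof -
      have "u < a0 \<longleftrightarrow> s * u < s * a0" using sp by simp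
      also have "s * a0 = - k - \<Delta>" using sp P1 by (simp add: a0_def k_def field_simps)
      finally show ?thesis by linarith
    qed
    have ub: "b0 < u \<longleftrightarrow> k < \<Delta> + s * u"
    proof -
      have "b0 < u \<longleftrightarrow> s * b0 < s * u" using sp by simp
      also have "s * b0 = k - \<Delta>" using sp P1 by (simp add: b0_def k_def field_simps)
      finally show ?thesis by linarith
    qed
    have k0: "k \<ge> 0" using sp cc by (simp add: k_def)
    consider "u < a0" | "a0 \<le> u" "u \<le> b0" | "b0 < u" by linarith
    then show "s * (normal_density \<Delta> s (\<Delta> + s * u) * FF L (mfun s0 s1 k \<Delta> (\<Delta> + s * u))) = T1 u + T2 u + T3 u"
    proof cases
      case 1
      then have "clipf k (\<Delta> + s * u) = - k" using ua k0 by (simp add: clipf_def)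
      then have "mfun s0 s1 k \<Delta> (\<Delta> + s * u) = sqrt g * (- (u + c))"
        unfolding mf using scale[of "- (u + c)"] by (simp add: k_def algebra_simps)
      then have "FF L (mfun s0 s1 k \<Delta> (\<Delta> + s * u)) = FF L (sqrt g * (- (u + c)))" by (simp only:)
      also have "\<dots> = H1 u"
      proof -
        have e1: "L - sqrt g * (- (u + c)) = L + sqrt g * (u + c)" by (simp add: algebra_simps)
        have e2: "- L - sqrt g * (- (u + c)) = - L + sqrt g * (u + c)" by (simp add: algebra_simps)
        show ?thesis unfolding FF_def H1_def e1 e2 ..
      qed
      finally have "FF L (mfun s0 s1 k \<Delta> (\<Delta> + s * u)) = H1 u" .
      then show ?thesis using 1 ab nd
        by (simp add: T1_def T2_def T3_def phi_std_def mult.assoc[symmetric])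
    next
      case 2
      then have "clipf k (\<Delta> + s * u) = \<Delta> + s * u" using ua ub k0 by (simp add: clipf_def)
      then have "mfun s0 s1 k \<Delta> (\<Delta> + s * u) = g / sqrt (1+g) * t"
        unfolding mf using P2 by simp
      then have "FF L (mfun s0 s1 k \<Delta> (\<Delta> + s * u)) = M"
        by (simp add: FF_def M_def)
      then show ?thesis using 2 nd
        by (simp add: T1_def T2_def T3_def mult.assoc[symmetric])
    next
      case 3
      then have "clipf k (\<Delta> + s * u) = k" using ub k0 by (simp add: clipf_def)
      then have "mfun s0 s1 k \<Delta> (\<Delta> + s * u) = sqrt g * (c - u)"
        unfolding mf using scale[of "c - u"] by (simp add: k_def algebra_simps)
      then have "FF L (mfun s0 s1 k \<Delta> (\<Delta> + s * u)) = FF L (sqrt g * (c - u))" by (simp only:)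
      also have "\<dots> = H2 u"
      proof -
        have e1: "L - sqrt g * (c - u) = L + sqrt g * (u - c)" by (simp add: algebra_simps)
        have e2: "- L - sqrt g * (c - u) = - L + sqrt g * (u - c)" by (simp add: algebra_simps)
        show ?thesis unfolding FF_def H2_def e1 e2 ..
      qed
      finally have "FF L (mfun s0 s1 k \<Delta> (\<Delta> + s * u)) = H2 u" .
      then show ?thesis using 3 ab nd
        by (simp add: T1_def T2_def T3_def phi_std_def mult.assoc[symmetric])
    qed
  qed
  also have "\<dots> = (\<integral>u. T1 u \<partial>lborel) + (\<integral>u. T2 u \<partial>lborel) + (\<integral>u. T3 u \<partial>lborel)"
    using iT1 iT2 iT3 by simp
  also have "(\<integral>u. T1 u \<partial>lborel) = (Phi_std b0 - Phi_std a0) * M"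
    unfolding T1_def using std_interval[OF ab] by simp
  also have "(\<integral>u. T2 u \<partial>lborel) = (LBINT u=-\<infinity>..ereal a0. H1 u * phi_std u)"
    unfolding T2_def by (simp add: interval_lebesgue_integral_le_eq set_lebesgue_integral_def)
  also have "(\<integral>u. T3 u \<partial>lborel) = (LBINT u=ereal b0..\<infinity>. H2 u * phi_std u)"
    unfolding T3_def by (simp add: interval_lebesgue_integral_le_eq set_lebesgue_integral_def)
  finally show ?thesis unfolding a0_def b0_def M_def H1_def H2_def .
qed

lemma R_zero: "Rint s0 s1 k 0 \<Delta> = 0"
  unfolding Rint_def FF_def by simp

lemma FF_lip: "\<bar>FF L2 m - FF L1 m\<bar> \<le> 2 * \<bar>L2 - L1\<bar>"
proof -
  have a: "\<bar>Phi_std x - Phi_std y\<bar> \<le> \<bar>x - y\<bar>" for x y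
  proof (cases "x \<le> y")
    case True then show ?thesis using Phi_lipschitz[OF True] Phi_mono[OF True] by simp
  next
    case False then have "y \<le> x" by simp
    then show ?thesis using Phi_lipschitz[of y x] Phi_mono[of y x] by simp
  qed
  have "\<bar>FF L2 m - FF L1 m\<bar> \<le> \<bar>Phi_std (L2 - m) - Phi_std (L1 - m)\<bar> + \<bar>Phi_std (- L2 - m) - Phi_std (- L1 - m)\<bar>"
    unfolding FF_def by linarith
  also have "\<dots> \<le> \<bar>(L2 - m) - (L1 - m)\<bar> + \<bar>(- L2 - m) - (- L1 - m)\<bar>"
    by (intro add_mono a)
  also have "\<bar>(L2 - m) - (L1 - m)\<bar> = \<bar>L2 - L1\<bar>" by simp
  also have "\<bar>(- L2 - m) - (- L1 - m)\<bar> = \<bar>L2 - L1\<bar>" by linarith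
  finally have h: "\<bar>FF L2 m - FF L1 m\<bar> \<le> \<bar>L2 - L1\<bar> + \<bar>L2 - L1\<bar>" .
  show ?thesis unfolding mult_2 by (rule h)
qed

lemma R_lip:
  assumes s0: "s0 > 0" and s1: "s1 > 0"
  shows "\<bar>Rint s0 s1 k L2 \<Delta> - Rint s0 s1 k L1 \<Delta>\<bar> \<le> 2 * \<bar>L2 - L1\<bar>"
proof -
  define s where "s = sig s0 s1"
  have sp: "s > 0" using sig_pos[OF s0 s1] by (simp add: s_def)
  have FFb: "\<bar>FF L m\<bar> \<le> 1 + 2 * \<bar>L\<bar>" for L m
    using FF_lip[of L m 0] by (simp add: FF_def)
  have int: "integrable lborel (\<lambda>d. normal_density \<Delta> s d * FF L (mfun s0 s1 k \<Delta> d))" for L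
    by (rule int_nd_bounded[OF sp _ FFb]) measurable
  have eq: "Rint s0 s1 k L2 \<Delta> - Rint s0 s1 k L1 \<Delta> = (\<integral>d. normal_density \<Delta> s d * (FF L2 (mfun s0 s1 k \<Delta> d) - FF L1 (mfun s0 s1 k \<Delta> d)) \<partial>lborel)"
    unfolding Rint_def s_def[symmetric] using int[of L2] int[of L1]
    by (simp add: algebra_simps)
  have "\<bar>(\<integral>d. normal_density \<Delta> s d * (FF L2 (mfun s0 s1 k \<Delta> d) - FF L1 (mfun s0 s1 k \<Delta> d)) \<partial>lborel)\<bar> \<le> (\<integral>d. normal_density \<Delta> s d * (2 * \<bar>L2 - L1\<bar>) \<partial>lborel)"
  proof (rule integral_abs_bound_integral)
    show "integrable lborel (\<lambda>d. normal_density \<Delta> s d * (FF L2 (mfun s0 s1 k \<Delta> d) - FF L1 (mfun s0 s1 k \<Delta> d)))"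
      using int[of L2] int[of L1] by (simp add: right_diff_distrib)
    show "integrable lborel (\<lambda>d. normal_density \<Delta> s d * (2 * \<bar>L2 - L1\<bar>))"
      using integrable_normal_density[OF sp] by simp
    fix d show "\<bar>normal_density \<Delta> s d * (FF L2 (mfun s0 s1 k \<Delta> d) - FF L1 (mfun s0 s1 k \<Delta> d))\<bar> \<le> normal_density \<Delta> s d * (2 * \<bar>L2 - L1\<bar>)"
      unfolding abs_mult abs_of_nonneg[OF normal_density_nonneg]
      by (rule mult_left_mono[OF FF_lip normal_density_nonneg])
  qed
  also have "\<dots> = 2 * \<bar>L2 - L1\<bar>"
    unfolding integral_mult_left_zero integral_normal_density[OF sp] by (rule mult_1)
  finally show ?thesis unfolding eq .
qed

lemma R_cont:
  assumes s0: "s0 > 0" and s1: "s1 > 0"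
  shows "continuous_on A (\<lambda>L. Rint s0 s1 k L \<Delta>)"
proof (rule lipschitz_on_continuous_on)
  show "2-lipschitz_on A (\<lambda>L. Rint s0 s1 k L \<Delta>)"
    by (rule lipschitz_onI) (use R_lip[OF s0 s1] in \<open>auto simp: dist_real_def\<close>)
qed

lemma FF_mono_L: "L1 \<le> L2 \<Longrightarrow> FF L1 m \<le> FF L2 m"
  unfolding FF_def using Phi_mono[of "L1 - m" "L2 - m"] Phi_mono[of "-L2 - m" "-L1 - m"] by simp

lemma FF_strict: "L1 < L2 \<Longrightarrow> FF L1 m < FF L2 m"
  unfolding FF_def using Phi_strict_mono[of "L1 - m" "L2 - m"] Phi_strict_mono[of "-L2 - m" "-L1 - m"] by simp

lemma R_diff:
  assumes s0: "s0 > 0" and s1: "s1 > 0"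
  shows "Rint s0 s1 k L2 \<Delta> - Rint s0 s1 k L1 \<Delta> = (\<integral>d. normal_density \<Delta> (sig s0 s1) d * (FF L2 (mfun s0 s1 k \<Delta> d) - FF L1 (mfun s0 s1 k \<Delta> d)) \<partial>lborel)"
proof -
  define s where "s = sig s0 s1"
  have sp: "s > 0" using sig_pos[OF s0 s1] by (simp add: s_def)
  have FFb: "\<bar>FF L m\<bar> \<le> 1 + 2 * \<bar>L\<bar>" for L m
    using FF_lip[of L m 0] by (simp add: FF_def)
  have int: "integrable lborel (\<lambda>d. normal_density \<Delta> s d * FF L (mfun s0 s1 k \<Delta> d))" for L
    by (rule int_nd_bounded[OF sp _ FFb]) measurable
  show ?thesis
    unfolding Rint_def s_def[symmetric] using int[of L2] int[of L1]
    by (simp add: algebra_simps)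
qed

lemma R_strict:
  assumes s0: "s0 > 0" and s1: "s1 > 0" and k: "k > 0" and LL: "L1 < L2"
  shows "Rint s0 s1 k L1 \<Delta> < Rint s0 s1 k L2 \<Delta>"
proof -
  define s where "s = sig s0 s1"
  have sp: "s > 0" using sig_pos[OF s0 s1] by (simp add: s_def)
  define m0 where "m0 = wt s0 s1 * \<Delta> / sdv s0 s1"
  define C where "C = FF L2 m0 - FF L1 m0"
  have C: "C > 0" using FF_strict[OF LL] by (simp add: C_def)
  have FFb: "\<bar>FF L m\<bar> \<le> 1 + 2 * \<bar>L\<bar>" for L m
    using FF_lip[of L m 0] by (simp add: FF_def)
  have FFdb: "\<bar>FF L2 m - FF L1 m\<bar> \<le> 2 * \<bar>L2 - L1\<bar>" for m by (rule FF_lip)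
  have ab: "(-k - \<Delta>)/s < (k - \<Delta>)/s" using k sp by (simp add: divide_strict_right_mono)
  have "0 < C * (Phi_std ((k - \<Delta>)/s) - Phi_std ((-k - \<Delta>)/s))"
    using C Phi_strict_mono[OF ab] by simp
  also have "C * (Phi_std ((k - \<Delta>)/s) - Phi_std ((-k - \<Delta>)/s)) = (\<integral>d. normal_density \<Delta> s d * indicator {-k..k} d * C \<partial>lborel)"
    using normal_interval[OF sp, of "-k" k \<Delta>] k by simp
  also have "\<dots> \<le> (\<integral>d. normal_density \<Delta> s d * (FF L2 (mfun s0 s1 k \<Delta> d) - FF L1 (mfun s0 s1 k \<Delta> d)) \<partial>lborel)"
  proof (rule integral_mono)
    show "integrable lborel (\<lambda>d. normal_density \<Delta> s d * indicator {-k..k} d * C)"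
      by (intro integrable_mult_left integrable_real_mult_indicator) (use sp in auto)
    show "integrable lborel (\<lambda>d. normal_density \<Delta> s d * (FF L2 (mfun s0 s1 k \<Delta> d) - FF L1 (mfun s0 s1 k \<Delta> d)))"
      by (rule int_nd_bounded[OF sp _ FFdb]) measurable
    fix d
    show "normal_density \<Delta> s d * indicator {-k..k} d * C \<le> normal_density \<Delta> s d * (FF L2 (mfun s0 s1 k \<Delta> d) - FF L1 (mfun s0 s1 k \<Delta> d))"
    proof (cases "d \<in> {-k..k}")
      case True
      then have "clipf k d = d" by (auto simp: clipf_def)
      then have "mfun s0 s1 k \<Delta> d = m0" by (simp add: mfun_def m0_def)
      then show ?thesis using True by (simp add: C_def)
    next
      case False
      have "0 \<le> FF L2 (mfun s0 s1 k \<Delta> d) - FF L1 (mfun s0 s1 k \<Delta> d)"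
        using FF_mono_L[of L1 L2] LL by simp
      then show ?thesis using False by simp
    qed
  qed
  also have "\<dots> = Rint s0 s1 k L2 \<Delta> - Rint s0 s1 k L1 \<Delta>"
    unfolding R_diff[OF s0 s1] s_def ..
  finally show ?thesis by simp
qed

lemma R_lim:
  assumes s0: "s0 > 0" and s1: "s1 > 0"
  shows "((\<lambda>L. Rint s0 s1 k L \<Delta>) \<longlongrightarrow> 1) at_top"
proof -
  define s where "s = sig s0 s1"
  have sp: "s > 0" using sig_pos[OF s0 s1] by (simp add: s_def)
  have FFlim: "((\<lambda>L. FF L m) \<longlongrightarrow> 1) at_top" for m
  proof -
    have "((\<lambda>L. Phi_std (L - m)) \<longlongrightarrow> 1) at_top"
      by (rule filterlim_compose[OF Phi_at_top]) real_asymp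
    moreover have "((\<lambda>L. Phi_std (- L - m)) \<longlongrightarrow> 0) at_top"
      by (rule filterlim_compose[OF Phi_at_bot]) real_asymp
    ultimately show ?thesis unfolding FF_def using tendsto_diff by fastforce
  qed
  have "((\<lambda>L. \<integral>d. normal_density \<Delta> s d * FF L (mfun s0 s1 k \<Delta> d) \<partial>lborel) \<longlongrightarrow> (\<integral>d. normal_density \<Delta> s d \<partial>lborel)) at_top"
  proof (rule integral_dominated_convergence_at_top[where w="normal_density \<Delta> s"])
    show "integrable lborel (normal_density \<Delta> s)" using sp by simp
    show "AE d in lborel. ((\<lambda>L. normal_density \<Delta> s d * FF L (mfun s0 s1 k \<Delta> d)) \<longlongrightarrow> normal_density \<Delta> s d) at_top"
      using tendsto_mult[OF tendsto_const FFlim] by (intro AE_I2) fastforce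
    show "\<forall>\<^sub>F L in at_top. AE d in lborel. norm (normal_density \<Delta> s d * FF L (mfun s0 s1 k \<Delta> d)) \<le> normal_density \<Delta> s d"
    proof (rule eventually_mono[OF eventually_ge_at_top[of 0]])
      fix L :: real assume L: "0 \<le> L"
      show "AE d in lborel. norm (normal_density \<Delta> s d * FF L (mfun s0 s1 k \<Delta> d)) \<le> normal_density \<Delta> s d"
      proof (rule AE_I2)
        fix d
        have "\<bar>FF L (mfun s0 s1 k \<Delta> d)\<bar> \<le> 1" using FF_nonneg[OF L] FF_le1 by (simp add: abs_le_iff)
        then show "norm (normal_density \<Delta> s d * FF L (mfun s0 s1 k \<Delta> d)) \<le> normal_density \<Delta> s d"
          unfolding real_norm_def abs_mult abs_of_nonneg[OF normal_density_nonneg]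
          using mult_left_mono[of _ 1 "normal_density \<Delta> s d"] by simp
      qed
    qed
  qed measurable
  then show ?thesis using sp unfolding Rint_def s_def by simp
qed

theorem theorem3:
  fixes s0 s1 \<alpha> :: real
  assumes s0: "s0 > 0" and s1: "s1 > 0" and \<alpha>: "0 < \<alpha>" "\<alpha> < 1"
  defines "g \<equiv> gam s0 s1" and "c \<equiv> crit (\<alpha>/2)"
  shows
    "(\<forall>\<tau> L. L > 0 \<longrightarrow>
        (\<forall>\<Delta>. cov_ST s0 s1 \<alpha> \<tau> (-\<Delta>) L = cov_ST s0 s1 \<alpha> \<tau> \<Delta> L) \<and>
        (\<forall>\<Delta>1 \<Delta>2. \<bar>\<Delta>1\<bar> \<le> \<bar>\<Delta>2\<bar> \<longrightarrow> cov_ST s0 s1 \<alpha> \<tau> \<Delta>2 L \<le> cov_ST s0 s1 \<alpha> \<tau> \<Delta>1 L))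
   \<and>
    (\<forall>\<tau> t L. L \<ge> 0 \<longrightarrow>
        cov_ST s0 s1 \<alpha> \<tau> (t * s0) L =
          (Phi_std (c - sqrt (g/(1+g)) * t) - Phi_std (-c - sqrt (g/(1+g)) * t)) *
          (Phi_std (L - g / sqrt (1+g) * t) - Phi_std (-L - g / sqrt (1+g) * t))
        + (LBINT u=-\<infinity>..ereal (-c - sqrt (g/(1+g)) * t).
              (Phi_std (L + sqrt g * (u + c)) - Phi_std (-L + sqrt g * (u + c))) * phi_std u)
        + (LBINT u=ereal (c - sqrt (g/(1+g)) * t)..\<infinity>.
              (Phi_std (L + sqrt g * (u - c)) - Phi_std (-L + sqrt g * (u - c))) * phi_std u))
   \<and>
    (\<forall>\<tau> b \<zeta>. b \<ge> 0 \<longrightarrow> 0 < \<zeta> \<longrightarrow> \<zeta> < 1 \<longrightarrow>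
       (let Lhat = Inf {L. L \<ge> 0 \<and>
                     (INF \<Delta>\<in>{\<Delta>. \<bar>\<Delta> / s0\<bar> \<le> b}. cov_ST s0 s1 \<alpha> \<tau> \<Delta> L) \<ge> 1 - \<zeta>} in
        Lhat \<ge> 0 \<and>
        cov_ST s0 s1 \<alpha> \<tau> (b * s0) Lhat = 1 - \<zeta> \<and>
        (\<forall>L. L \<ge> 0 \<longrightarrow> cov_ST s0 s1 \<alpha> \<tau> (b * s0) L = 1 - \<zeta> \<longrightarrow> L = Lhat) \<and>
        (\<forall>\<Delta>. \<bar>\<Delta> / s0\<bar> \<le> b \<longrightarrow> cov_ST s0 s1 \<alpha> \<tau> \<Delta> Lhat \<ge> 1 - \<zeta>) \<and>
        (\<forall>L. 0 \<le> L \<longrightarrow> L < Lhat \<longrightarrow>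
             (\<exists>\<Delta>. \<bar>\<Delta> / s0\<bar> \<le> b \<and> cov_ST s0 s1 \<alpha> \<tau> \<Delta> L < 1 - \<zeta>))))"
proof -
  have a2: "0 < \<alpha>/2" "\<alpha>/2 < 1/2" using \<alpha> by auto
  have cpos: "c > 0" unfolding c_def by (rule crit_props(2)[OF a2])
  have c0: "crit (\<alpha>/2) \<ge> 0" using cpos by (simp add: c_def)
  define k where "k = sig s0 s1 * c"
  have kpos: "k > 0" using cpos sig_pos[OF s0 s1] by (simp add: k_def)
  have rep: "cov_ST s0 s1 \<alpha> \<tau> \<Delta> L = Rint s0 s1 k L \<Delta>" if "L \<ge> 0" for \<tau> \<Delta> L
    unfolding cov_rep[OF s0 s1 that c0] Rint_def k_def c_def ..
  have Rabs: "Rint s0 s1 k L \<Delta> = Rint s0 s1 k L \<bar>\<Delta>\<bar>" for L \<Delta>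
  proof (cases "\<Delta> \<ge> 0")
    case True then show ?thesis by simp
  next
    case False then have "\<bar>\<Delta>\<bar> = - \<Delta>" by simp
    then show ?thesis using R_sym[of k s0 s1 L \<Delta>] kpos by simp
  qed
  have mono: "cov_ST s0 s1 \<alpha> \<tau> \<Delta>2 L \<le> cov_ST s0 s1 \<alpha> \<tau> \<Delta>1 L"
    if L: "L \<ge> 0" and D: "\<bar>\<Delta>1\<bar> \<le> \<bar>\<Delta>2\<bar>" for \<tau> L \<Delta>1 \<Delta>2
  proof -
    have "Rint s0 s1 k L \<bar>\<Delta>2\<bar> \<le> Rint s0 s1 k L \<bar>\<Delta>1\<bar>"
      by (rule R_mono[OF s0 s1 L]) (use kpos D in auto)
    then show ?thesis unfolding rep[OF L] using Rabs[of L \<Delta>1] Rabs[of L \<Delta>2] by simp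
  qed
  have part1: "\<forall>\<tau> L. L > 0 \<longrightarrow>
        (\<forall>\<Delta>. cov_ST s0 s1 \<alpha> \<tau> (-\<Delta>) L = cov_ST s0 s1 \<alpha> \<tau> \<Delta> L) \<and>
        (\<forall>\<Delta>1 \<Delta>2. \<bar>\<Delta>1\<bar> \<le> \<bar>\<Delta>2\<bar> \<longrightarrow> cov_ST s0 s1 \<alpha> \<tau> \<Delta>2 L \<le> cov_ST s0 s1 \<alpha> \<tau> \<Delta>1 L)"
  proof (intro allI impI conjI)
    fix \<tau> L \<Delta> :: real assume L: "L > 0"
    show "cov_ST s0 s1 \<alpha> \<tau> (-\<Delta>) L = cov_ST s0 s1 \<alpha> \<tau> \<Delta> L"
      using L rep[of L] R_sym[of k s0 s1 L \<Delta>] kpos by simp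
  next
    fix \<tau> L \<Delta>1 \<Delta>2 :: real assume L: "L > 0" and D: "\<bar>\<Delta>1\<bar> \<le> \<bar>\<Delta>2\<bar>"
    show "cov_ST s0 s1 \<alpha> \<tau> \<Delta>2 L \<le> cov_ST s0 s1 \<alpha> \<tau> \<Delta>1 L"
      using mono[of L \<Delta>1 \<Delta>2 \<tau>] L D by simp
  qed
  have part2: "\<forall>\<tau> t L. L \<ge> 0 \<longrightarrow>
        cov_ST s0 s1 \<alpha> \<tau> (t * s0) L =
          (Phi_std (c - sqrt (g/(1+g)) * t) - Phi_std (-c - sqrt (g/(1+g)) * t)) *
          (Phi_std (L - g / sqrt (1+g) * t) - Phi_std (-L - g / sqrt (1+g) * t))
        + (LBINT u=-\<infinity>..ereal (-c - sqrt (g/(1+g)) * t).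
              (Phi_std (L + sqrt g * (u + c)) - Phi_std (-L + sqrt g * (u + c))) * phi_std u)
        + (LBINT u=ereal (c - sqrt (g/(1+g)) * t)..\<infinity>.
              (Phi_std (L + sqrt g * (u - c)) - Phi_std (-L + sqrt g * (u - c))) * phi_std u)"
    unfolding g_def c_def using formula_ii[OF s0 s1 _ c0] by blast
  have part3: "\<forall>\<tau> b \<zeta>. b \<ge> 0 \<longrightarrow> 0 < \<zeta> \<longrightarrow> \<zeta> < 1 \<longrightarrow>
       (let Lhat = Inf {L. L \<ge> 0 \<and>
                     (INF \<Delta>\<in>{\<Delta>. \<bar>\<Delta> / s0\<bar> \<le> b}. cov_ST s0 s1 \<alpha> \<tau> \<Delta> L) \<ge> 1 - \<zeta>} in
        Lhat \<ge> 0 \<and>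
        cov_ST s0 s1 \<alpha> \<tau> (b * s0) Lhat = 1 - \<zeta> \<and>
        (\<forall>L. L \<ge> 0 \<longrightarrow> cov_ST s0 s1 \<alpha> \<tau> (b * s0) L = 1 - \<zeta> \<longrightarrow> L = Lhat) \<and>
        (\<forall>\<Delta>. \<bar>\<Delta> / s0\<bar> \<le> b \<longrightarrow> cov_ST s0 s1 \<alpha> \<tau> \<Delta> Lhat \<ge> 1 - \<zeta>) \<and>
        (\<forall>L. 0 \<le> L \<longrightarrow> L < Lhat \<longrightarrow>
             (\<exists>\<Delta>. \<bar>\<Delta> / s0\<bar> \<le> b \<and> cov_ST s0 s1 \<alpha> \<tau> \<Delta> L < 1 - \<zeta>)))"
  proof (intro allI impI)
    fix \<tau> b \<zeta> :: real
    assume b: "b \<ge> 0" and z: "0 < \<zeta>" "\<zeta> < 1"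
    define Db where "Db = b * s0"
    define D where "D = {\<Delta>. \<bar>\<Delta> / s0\<bar> \<le> b}"
    define H where "H L = Rint s0 s1 k L Db" for L
    have Db: "Db \<in> D" using s0 b by (simp add: D_def Db_def)
    have inD: "\<bar>\<Delta>\<bar> \<le> \<bar>Db\<bar>" if "\<Delta> \<in> D" for \<Delta>
      using that s0 b by (simp add: D_def Db_def abs_divide abs_mult divide_le_eq)
    have INF_eq: "(INF \<Delta>\<in>D. cov_ST s0 s1 \<alpha> \<tau> \<Delta> L) = H L" if L: "L \<ge> 0" for L
    proof -
      have "(INF \<Delta>\<in>D. cov_ST s0 s1 \<alpha> \<tau> \<Delta> L) = cov_ST s0 s1 \<alpha> \<tau> Db L"
        unfolding image_def
        by (rule cInf_eq_minimum) (use Db mono[OF L inD] in auto)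
      then show ?thesis using rep[OF L] by (simp add: H_def)
    qed
    have Hstrict: "H L1 < H L2" if "L1 < L2" for L1 L2
      unfolding H_def by (rule R_strict[OF s0 s1 kpos that])
    have Hcont: "continuous_on A H" for A unfolding H_def by (rule R_cont[OF s0 s1])
    have H0: "H 0 = 0" unfolding H_def by (rule R_zero)
    have "\<forall>\<^sub>F L in at_top. H L > 1 - \<zeta>"
      using R_lim[OF s0 s1, of k Db] z unfolding H_def by (intro order_tendstoD) auto
    then obtain N0 where N0: "\<And>L. L \<ge> N0 \<Longrightarrow> H L > 1 - \<zeta>"
      by (auto simp: eventually_at_top_linorder)
    define N where "N = max N0 0"
    have N: "0 \<le> N" "H N > 1 - \<zeta>" using N0[of N] by (auto simp: N_def)
    have "\<exists>x. 0 \<le> x \<and> x \<le> N \<and> H x = 1 - \<zeta>"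
      by (rule IVT') (use H0 N z Hcont in auto)
    then obtain Ls where Ls: "0 \<le> Ls" "H Ls = 1 - \<zeta>" by blast
    have Hge: "1 - \<zeta> \<le> H L \<longleftrightarrow> Ls \<le> L" for L
    proof
      assume "1 - \<zeta> \<le> H L"
      then show "Ls \<le> L" using Hstrict[of L Ls] Ls by (cases "L < Ls") auto
    next
      assume "Ls \<le> L"
      then show "1 - \<zeta> \<le> H L" using Hstrict[of Ls L] Ls by (cases "Ls = L") auto
    qed
    have set_eq: "{L. L \<ge> 0 \<and> (INF \<Delta>\<in>D. cov_ST s0 s1 \<alpha> \<tau> \<Delta> L) \<ge> 1 - \<zeta>} = {Ls..}"
    proof (intro set_eqI iffI)
      fix L assume "L \<in> {L. L \<ge> 0 \<and> (INF \<Delta>\<in>D. cov_ST s0 s1 \<alpha> \<tau> \<Delta> L) \<ge> 1 - \<zeta>}"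
      then have "L \<ge> 0" "1 - \<zeta> \<le> H L" using INF_eq by auto
      then show "L \<in> {Ls..}" using Hge by auto
    next
      fix L assume "L \<in> {Ls..}"
      then have L: "Ls \<le> L" "0 \<le> L" using Ls by auto
      then show "L \<in> {L. L \<ge> 0 \<and> (INF \<Delta>\<in>D. cov_ST s0 s1 \<alpha> \<tau> \<Delta> L) \<ge> 1 - \<zeta>}"
        using INF_eq[OF L(2)] Hge[of L] by auto
    qed
    have Lhat: "Inf {L. L \<ge> 0 \<and> (INF \<Delta>\<in>D. cov_ST s0 s1 \<alpha> \<tau> \<Delta> L) \<ge> 1 - \<zeta>} = Ls"
      unfolding set_eq by simp
    show "let Lhat = Inf {L. L \<ge> 0 \<and>
                     (INF \<Delta>\<in>{\<Delta>. \<bar>\<Delta> / s0\<bar> \<le> b}. cov_ST s0 s1 \<alpha> \<tau> \<Delta> L) \<ge> 1 - \<zeta>} in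
        Lhat \<ge> 0 \<and>
        cov_ST s0 s1 \<alpha> \<tau> (b * s0) Lhat = 1 - \<zeta> \<and>
        (\<forall>L. L \<ge> 0 \<longrightarrow> cov_ST s0 s1 \<alpha> \<tau> (b * s0) L = 1 - \<zeta> \<longrightarrow> L = Lhat) \<and>
        (\<forall>\<Delta>. \<bar>\<Delta> / s0\<bar> \<le> b \<longrightarrow> cov_ST s0 s1 \<alpha> \<tau> \<Delta> Lhat \<ge> 1 - \<zeta>) \<and>
        (\<forall>L. 0 \<le> L \<longrightarrow> L < Lhat \<longrightarrow>
             (\<exists>\<Delta>. \<bar>\<Delta> / s0\<bar> \<le> b \<and> cov_ST s0 s1 \<alpha> \<tau> \<Delta> L < 1 - \<zeta>))"
      unfolding Let_def D_def[symmetric] Lhat Db_def[symmetric]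
    proof (intro conjI allI impI)
      show "0 \<le> Ls" by (rule Ls(1))
      show c1: "cov_ST s0 s1 \<alpha> \<tau> Db Ls = 1 - \<zeta>" using rep[OF Ls(1)] Ls(2) by (simp add: H_def)
      fix L assume L: "0 \<le> L" "cov_ST s0 s1 \<alpha> \<tau> Db L = 1 - \<zeta>"
      then have "H L = H Ls" using rep[OF L(1)] Ls(2) by (simp add: H_def)
      then show "L = Ls" using Hstrict[of L Ls] Hstrict[of Ls L] by (cases "L < Ls"; cases "Ls < L") auto
    next
      fix \<Delta> assume "\<bar>\<Delta> / s0\<bar> \<le> b"
      then have "\<Delta> \<in> D" by (simp add: D_def)
      then have "cov_ST s0 s1 \<alpha> \<tau> Db Ls \<le> cov_ST s0 s1 \<alpha> \<tau> \<Delta> Ls" by (intro mono Ls(1) inD)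
      then show "1 - \<zeta> \<le> cov_ST s0 s1 \<alpha> \<tau> \<Delta> Ls" using rep[OF Ls(1)] Ls(2) by (simp add: H_def)
    next
      fix L assume L: "0 \<le> L" "L < Ls"
      show "\<exists>\<Delta>. \<bar>\<Delta> / s0\<bar> \<le> b \<and> cov_ST s0 s1 \<alpha> \<tau> \<Delta> L < 1 - \<zeta>"
      proof (intro exI conjI)
        show "\<bar>Db / s0\<bar> \<le> b" using Db by (simp add: D_def)
        show "cov_ST s0 s1 \<alpha> \<tau> Db L < 1 - \<zeta>"
          using rep[OF L(1)] Hstrict[OF L(2)] Ls(2) by (simp add: H_def)
      qed
    qed
  qed
  show ?thesis using part1 part2 part3 by blast
qed

end
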